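(* Let $w\in\mathbb{R}^N_{>0}$, $R\ge2$, $1\le K\le R$, assume $\mu_i\ge1$ for all $i$, and let $\nu=w^{-1}\odot\big(\frac{K-1}{R-1}\mu+\frac{R-K}{R-1}\mathbf{1}\big)$. Consider Algorithm 6: initialize $y^{(0)}\in\mathcal{B}$; at each iteration $k$ draw $C_{i_k}\subseteq[R]$ uniformly at random among subsets of size $K$, independently of the past; for $r\in C_{i_k}$ set $y^{(k+1)}_r=\Pi_{\mathcal{B}_r,\nu}\big(y^{(k)}_r-\nu^{-1}\odot\nabla_rg_w(y^{(k)})\big)$, and $y^{(k+1)}_r=y^{(k)}_r$ for $r\notin C_{i_k}$. Let $g_w^*=\min_{y\in\mathcal{B}}g_w(y)$. Then for all $k\ge0$, $$\mathbb{E}\Big[g_w(y^{(k)})-g_w^*+\tfrac12d^2_{I(\nu)}(y^{(k)},\Xi_w)\Big]\le\Big[1-\frac{4K}{R(\|w\|_1\|\nu\|_1+2)}\Big]^k\Big[g_w(y^{(0)})-g_w^*+\tfrac12d^2_{I(\nu)}(y^{(0)},\Xi_w)\Big].$$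
   Context: $F_r:2^{[N]}\to\mathbb{R}$ ($r\in[R]$) are submodular with $F_r(\emptyset)=0$, base polytopes $\mathcal{B}_r=\{u\in\mathbb{R}^N:\sum_{i\in S}u_i\le F_r(S)\ \forall S,\ \sum_iu_i=F_r([N])\}$; $\mathcal{B}=\mathcal{B}_1\times\cdots\times\mathcal{B}_R$; $A:(\mathbb{R}^N)^R\to\mathbb{R}^N$, $Ay=\sum_ry_r$. $g_w(y)=\frac12\|Ay\|^2_{2,w^{-1}}$, with block gradient $\nabla_rg_w(y)=w^{-1}\odot Ay$. $S_r$ is the set of $i$ with $F_r(S\cup\{i\})\ne F_r(S)$ for some $S\subseteq[N]\setminus\{i\}$; $\mu_i=|\{r:i\in S_r\}|$; $\mathbf{1}$ is the all-ones vector. $\Xi_w$ is the set of minimizers of $g_w$ over $\mathcal{B}$. Powers, inverses and $\odot$ are element-wise; $\|z\|_{2,v}=\sqrt{\sum_iv_iz_i^2}$; $\Pi_{\Omega,v}(u)=\arg\min_{z\in\Omega}\|z-u\|_{2,v}$; $I(v)$ has all $R$ blocks equal to $v$; $\|y\|_{2,\theta}=\sqrt{\sum_r\|y_r\|^2_{2,\theta_r}}$; $d_\theta(y,\mathcal{K})=\min_{z\in\mathcal{K}}\|y-z\|_{2,\theta}$. *)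

theory Defs
  imports "HOL-Analysis.Analysis" "HOL-Probability.Probability"
begin

text \<open>Coordinates [N] are the finite type 'n (N = CARD('n)); blocks r are naturals r < R.
  A point of (R^N)^R is y :: nat => 'n => real, with y r = 0 for r >= R on the feasible set.\<close>

definition submodular :: "('n set \<Rightarrow> real) \<Rightarrow> bool" where
  "submodular F \<longleftrightarrow> (\<forall>A B. F (A \<union> B) + F (A \<inter> B) \<le> F A + F B)"

definition base_polytope :: "('n::finite set \<Rightarrow> real) \<Rightarrow> ('n \<Rightarrow> real) set" where
  "base_polytope F = {u. (\<forall>S. (\<Sum>i\<in>S. u i) \<le> F S) \<and> (\<Sum>i\<in>UNIV. u i) = F UNIV}"

definition prod_base :: "nat \<Rightarrow> (nat \<Rightarrow> 'n::finite set \<Rightarrow> real) \<Rightarrow> (nat \<Rightarrow> 'n \<Rightarrow> real) set" where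
  "prod_base R F = {y. (\<forall>r<R. y r \<in> base_polytope (F r)) \<and> (\<forall>r\<ge>R. y r = (\<lambda>_. 0))}"

definition Aop :: "nat \<Rightarrow> (nat \<Rightarrow> 'n \<Rightarrow> real) \<Rightarrow> 'n \<Rightarrow> real" where
  "Aop R y = (\<lambda>i. \<Sum>r<R. y r i)"

definition wnorm :: "('n::finite \<Rightarrow> real) \<Rightarrow> ('n \<Rightarrow> real) \<Rightarrow> real" where
  "wnorm v z = sqrt (\<Sum>i\<in>UNIV. v i * (z i)\<^sup>2)"

definition g_w :: "nat \<Rightarrow> ('n::finite \<Rightarrow> real) \<Rightarrow> (nat \<Rightarrow> 'n \<Rightarrow> real) \<Rightarrow> real" where
  "g_w R w y = (1/2) * (wnorm (\<lambda>i. inverse (w i)) (Aop R y))\<^sup>2"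

definition grad_r :: "nat \<Rightarrow> ('n::finite \<Rightarrow> real) \<Rightarrow> (nat \<Rightarrow> 'n \<Rightarrow> real) \<Rightarrow> 'n \<Rightarrow> real" where
  "grad_r R w y = (\<lambda>i. inverse (w i) * Aop R y i)"

definition support_set :: "('n set \<Rightarrow> real) \<Rightarrow> 'n set" where
  "support_set F = {i. \<exists>S. i \<notin> S \<and> F (insert i S) \<noteq> F S}"

definition mu :: "nat \<Rightarrow> (nat \<Rightarrow> 'n set \<Rightarrow> real) \<Rightarrow> 'n \<Rightarrow> nat" where
  "mu R F i = card {r. r < R \<and> i \<in> support_set (F r)}"

definition wproj :: "('n::finite \<Rightarrow> real) set \<Rightarrow> ('n \<Rightarrow> real) \<Rightarrow> ('n \<Rightarrow> real) \<Rightarrow> 'n \<Rightarrow> real" where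
  "wproj \<Omega> v u = (SOME z. z \<in> \<Omega> \<and> (\<forall>z'\<in>\<Omega>. wnorm v (\<lambda>i. z i - u i) \<le> wnorm v (\<lambda>i. z' i - u i)))"

definition g_star :: "nat \<Rightarrow> (nat \<Rightarrow> 'n::finite set \<Rightarrow> real) \<Rightarrow> ('n \<Rightarrow> real) \<Rightarrow> real" where
  "g_star R F w = (INF y\<in>prod_base R F. g_w R w y)"

definition Xi :: "nat \<Rightarrow> (nat \<Rightarrow> 'n::finite set \<Rightarrow> real) \<Rightarrow> ('n \<Rightarrow> real) \<Rightarrow> (nat \<Rightarrow> 'n \<Rightarrow> real) set" where
  "Xi R F w = {y \<in> prod_base R F. \<forall>z\<in>prod_base R F. g_w R w y \<le> g_w R w z}"

definition blk_norm :: "nat \<Rightarrow> ('n::finite \<Rightarrow> real) \<Rightarrow> (nat \<Rightarrow> 'n \<Rightarrow> real) \<Rightarrow> real" where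
  "blk_norm R v y = sqrt (\<Sum>r<R. (wnorm v (y r))\<^sup>2)"

definition blk_dist :: "nat \<Rightarrow> ('n::finite \<Rightarrow> real) \<Rightarrow> (nat \<Rightarrow> 'n \<Rightarrow> real) \<Rightarrow> (nat \<Rightarrow> 'n \<Rightarrow> real) set \<Rightarrow> real" where
  "blk_dist R v y K = (INF z\<in>K. blk_norm R v (\<lambda>r i. y r i - z r i))"

definition alg_step :: "nat \<Rightarrow> (nat \<Rightarrow> 'n::finite set \<Rightarrow> real) \<Rightarrow> ('n \<Rightarrow> real) \<Rightarrow> ('n \<Rightarrow> real)
    \<Rightarrow> nat set \<Rightarrow> (nat \<Rightarrow> 'n \<Rightarrow> real) \<Rightarrow> (nat \<Rightarrow> 'n \<Rightarrow> real)" where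
  "alg_step R F w \<nu> C y = (\<lambda>r. if r \<in> C then
       wproj (base_polytope (F r)) \<nu> (\<lambda>i. y r i - inverse (\<nu> i) * grad_r R w y i)
     else y r)"

definition alg_iter :: "nat \<Rightarrow> (nat \<Rightarrow> 'n::finite set \<Rightarrow> real) \<Rightarrow> ('n \<Rightarrow> real) \<Rightarrow> ('n \<Rightarrow> real)
    \<Rightarrow> (nat \<Rightarrow> 'n \<Rightarrow> real) \<Rightarrow> nat set list \<Rightarrow> (nat \<Rightarrow> 'n \<Rightarrow> real)" where
  "alg_iter R F w \<nu> y0 Cs = foldl (\<lambda>y C. alg_step R F w \<nu> C y) y0 Cs"

text \<open>K-subsets of [R], and sequences of k independent uniform draws from them.\<close>
definition Ksubsets :: "nat \<Rightarrow> nat \<Rightarrow> nat set set" where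
  "Ksubsets R K = {C. C \<subseteq> {..<R} \<and> card C = K}"

definition draw_seqs :: "nat \<Rightarrow> nat \<Rightarrow> nat \<Rightarrow> nat set list set" where
  "draw_seqs R K k = {Cs. length Cs = k \<and> set Cs \<subseteq> Ksubsets R K}"

end

theory Submission
  imports Defs
begin

lemma bp_le: "u \<in> base_polytope F \<Longrightarrow> sum u S \<le> F S"
  by (auto simp: base_polytope_def)
lemma bp_sum: "u \<in> base_polytope F \<Longrightarrow> sum u UNIV = F UNIV"
  by (auto simp: base_polytope_def)

lemma bp_upper: "u \<in> base_polytope F \<Longrightarrow> u i \<le> F {i}"
  using bp_le[of u F "{i}"] by simp

lemma bp_lower:
  fixes u :: "'n::finite \<Rightarrow> real"
  assumes "u \<in> base_polytope F" shows "u i \<ge> F UNIV - F (UNIV - {i})"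
proof -
  have "sum u UNIV = u i + sum u (UNIV - {i})"
    by (metis UNIV_I add.commute finite sum.remove)
  then show ?thesis using bp_le[OF assms, of "UNIV - {i}"] bp_sum[OF assms] by linarith
qed

lemma bp_zero_outside:
  fixes u :: "'n::finite \<Rightarrow> real"
  assumes "u \<in> base_polytope F" "F {} = 0" "i \<notin> support_set F"
  shows "u i = 0"
proof -
  have eq: "\<And>S. i \<notin> S \<Longrightarrow> F (insert i S) = F S" using assms(3) by (auto simp: support_set_def)
  have "F {i} = 0" using eq[of "{}"] assms(2) by simp
  moreover have "F (UNIV - {i}) = F UNIV" using eq[of "UNIV - {i}"] by (simp add: insert_absorb)
  ultimately show ?thesis using bp_upper[OF assms(1), of i] bp_lower[OF assms(1), of i] by simp
qed

lemma bp_convex: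
  assumes "u \<in> base_polytope F" "v \<in> base_polytope F" "0 \<le> t" "t \<le> 1"
  shows "(\<lambda>i. (1 - t) * u i + t * v i) \<in> base_polytope F"
proof -
  have "\<And>S. sum (\<lambda>i. (1 - t) * u i + t * v i) S = (1-t) * sum u S + t * sum v S"
    by (simp add: sum.distrib sum_distrib_left)
  moreover have "\<And>S. (1-t) * sum u S + t * sum v S \<le> (1 - t) * F S + t * F S"
    using assms by (intro add_mono mult_left_mono) (auto simp: base_polytope_def)
  moreover have "(1 - t) * F S + t * F S = F S" for S by (simp add: algebra_simps)
  ultimately have "\<And>S. sum (\<lambda>i. (1 - t) * u i + t * v i) S \<le> F S" by metis
  moreover have "sum (\<lambda>i. (1 - t) * u i + t * v i) UNIV = F UNIV"
    using \<open>\<And>S. sum (\<lambda>i. (1 - t) * u i + t * v i) S = (1-t) * sum u S + t * sum v S\<close>[of UNIV] assms(1,2)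
    by (simp add: base_polytope_def algebra_simps)
  ultimately show ?thesis unfolding base_polytope_def by blast
qed

lemma continuous_on_coord2: "continuous_on S (\<lambda>y::nat \<Rightarrow> 'n \<Rightarrow> real. y r i)"
  using continuous_on_product_then_coordinatewise[OF continuous_on_product_coordinates, of r i]
  by (rule continuous_on_subset) simp

lemma closed_bp: "closed (base_polytope (F::'n::finite set \<Rightarrow> real))"
proof -
  have e: "base_polytope F = (\<Inter>S. {u. sum u S \<le> F S}) \<inter> {u. sum u UNIV = F UNIV}"
    unfolding base_polytope_def by blast
  have c1: "closed {u::'n\<Rightarrow>real. sum u S \<le> F S}" for S
    by (intro closed_Collect_le continuous_on_sum continuous_on_const continuous_on_product_coordinates)
  have c2: "closed {u::'n\<Rightarrow>real. sum u UNIV = F UNIV}"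
    by (intro closed_Collect_eq continuous_on_sum continuous_on_const continuous_on_product_coordinates)
  show ?thesis unfolding e by (intro closed_Int closed_INT ballI c1 c2)
qed

lemma compact_bp: "compact (base_polytope (F::'n::finite set \<Rightarrow> real))"
proof -
  define box where "box = PiE UNIV (\<lambda>i::'n. {F UNIV - F (UNIV - {i}) .. F {i}})"
  have "compact box"
  proof -
    have "compactin (product_topology (\<lambda>_. euclidean) UNIV) (PiE UNIV (\<lambda>i::'n. {F UNIV - F (UNIV - {i}) .. F {i}}))"
      by (subst compactin_PiE) auto
    then show ?thesis by (simp add: euclidean_product_topology box_def)
  qed
  moreover have "base_polytope F \<subseteq> box"
  proof
    fix u assume "u \<in> base_polytope F"
    then show "u \<in> box" unfolding box_def using bp_upper[of u F] bp_lower[of u F] by (simp add: PiE_iff)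
  qed
  ultimately have "compact (box \<inter> base_polytope F)" using closed_bp by blast
  then show ?thesis using \<open>base_polytope F \<subseteq> box\<close> by (simp add: Int_absorb1)
qed

lemma closed_prod_base: "closed (prod_base R (F :: nat \<Rightarrow> 'n::finite set \<Rightarrow> real))"
proof -
  have e: "prod_base R F = (\<Inter>r. {y. r < R \<longrightarrow> y r \<in> base_polytope (F r)}) \<inter> (\<Inter>r. {y. R \<le> r \<longrightarrow> y r = (\<lambda>_. 0)})"
    unfolding prod_base_def by blast
  have c1: "closed {y::nat \<Rightarrow> 'n \<Rightarrow> real. r < R \<longrightarrow> y r \<in> base_polytope (F r)}" for r
  proof (cases "r < R")
    case True
    have "continuous_on UNIV (\<lambda>y::nat \<Rightarrow> 'n \<Rightarrow> real. y r)" by (rule continuous_on_product_coordinates)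
    then have "closed ((\<lambda>y::nat \<Rightarrow> 'n \<Rightarrow> real. y r) -` base_polytope (F r) \<inter> UNIV)"
      by (rule continuous_on_closed_vimage[OF closed_UNIV, THEN iffD1, rule_format, OF _ closed_bp])
    moreover have "{y::nat \<Rightarrow> 'n \<Rightarrow> real. r < R \<longrightarrow> y r \<in> base_polytope (F r)} = (\<lambda>y::nat \<Rightarrow> 'n \<Rightarrow> real. y r) -` base_polytope (F r) \<inter> UNIV"
      using True by auto
    ultimately show ?thesis by simp
  next
    case False then show ?thesis by simp
  qed
  have c2: "closed {y::nat \<Rightarrow> 'n \<Rightarrow> real. R \<le> r \<longrightarrow> y r = (\<lambda>_. 0)}" for r
  proof (cases "R \<le> r")
    case True
    have "continuous_on UNIV (\<lambda>y::nat \<Rightarrow> 'n \<Rightarrow> real. y r)" by (rule continuous_on_product_coordinates)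
    then have "closed ((\<lambda>y::nat \<Rightarrow> 'n \<Rightarrow> real. y r) -` {\<lambda>_. 0} \<inter> UNIV)"
      by (rule continuous_on_closed_vimage[OF closed_UNIV, THEN iffD1, rule_format, OF _ closed_singleton])
    moreover have "{y::nat \<Rightarrow> 'n \<Rightarrow> real. R \<le> r \<longrightarrow> y r = (\<lambda>_. 0)} = (\<lambda>y::nat \<Rightarrow> 'n \<Rightarrow> real. y r) -` {\<lambda>_. 0} \<inter> UNIV"
      using True by auto
    ultimately show ?thesis by simp
  next
    case False then show ?thesis by simp
  qed
  show ?thesis unfolding e by (intro closed_Int closed_INT ballI c1 c2)
qed

lemma compact_prod_base: "compact (prod_base R (F :: nat \<Rightarrow> 'n::finite set \<Rightarrow> real))"
proof -
  define box where "box = PiE UNIV (\<lambda>r::nat. if r < R then base_polytope (F r) else {\<lambda>_::'n. 0::real})"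
  have "compact box"
  proof -
    have "compactin (product_topology (\<lambda>_. euclidean) UNIV) (PiE UNIV (\<lambda>r::nat. if r < R then base_polytope (F r) else {\<lambda>_::'n. 0::real}))"
      by (subst compactin_PiE) (simp add: compact_bp)
    then show ?thesis by (simp add: euclidean_product_topology box_def)
  qed
  moreover have sub: "prod_base R F \<subseteq> box"
  proof
    fix y assume "y \<in> prod_base R F"
    then show "y \<in> box" unfolding box_def prod_base_def by (simp add: PiE_iff)
  qed
  have "compact (box \<inter> prod_base R F)" using \<open>compact box\<close> closed_prod_base by (rule compact_Int_closed)
  moreover have "box \<inter> prod_base R F = prod_base R F" using sub by blast
  ultimately show ?thesis by simp
qed

definition tight :: "('n::finite \<Rightarrow> real) \<Rightarrow> ('n set \<Rightarrow> real) \<Rightarrow> 'n set \<Rightarrow> bool" where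
  "tight u G S \<longleftrightarrow> sum u S = G S"

definition exch :: "('n::finite \<Rightarrow> real) \<Rightarrow> ('n set \<Rightarrow> real) \<Rightarrow> 'n \<Rightarrow> 'n \<Rightarrow> bool" where
  "exch u G j k \<longleftrightarrow> (\<forall>S. k \<in> S \<longrightarrow> j \<notin> S \<longrightarrow> sum u S < G S)"

lemma union_closed_mem:
  assumes "finite C" "C \<noteq> {}" "C \<subseteq> A" "\<And>S T. S \<in> A \<Longrightarrow> T \<in> A \<Longrightarrow> S \<union> T \<in> A"
  shows "\<Union>C \<in> A"
  using assms(1,2,3)
proof (induction C rule: finite_ne_induct)
  case (singleton x) then show ?case by simp
next
  case (insert x F) then show ?case using assms(4) by simp
qed

lemma inter_closed_mem:
  assumes "finite C" "C \<noteq> {}" "C \<subseteq> A" "\<And>S T. S \<in> A \<Longrightarrow> T \<in> A \<Longrightarrow> S \<inter> T \<in> A"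
  shows "\<Inter>C \<in> A"
  using assms(1,2,3)
proof (induction C rule: finite_ne_induct)
  case (singleton x) then show ?case by simp
next
  case (insert x F) then show ?case using assms(4) by simp
qed

lemma tight_un_int:
  fixes u :: "'n::finite \<Rightarrow> real"
  assumes sm: "submodular G" and u: "u \<in> base_polytope G" and S: "tight u G S" and T: "tight u G T"
  shows "tight u G (S \<union> T)" "tight u G (S \<inter> T)"
proof -
  have e: "sum u (S \<union> T) + sum u (S \<inter> T) = sum u S + sum u T"
    by (rule sum.union_inter) simp_all
  have s: "G (S \<union> T) + G (S \<inter> T) \<le> G S + G T" using sm by (simp add: submodular_def)
  have a: "sum u (S \<union> T) \<le> G (S \<union> T)" "sum u (S \<inter> T) \<le> G (S \<inter> T)"
    using u by (simp_all add: bp_le)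
  show "tight u G (S \<union> T)" "tight u G (S \<inter> T)"
    using e s a S T by (simp_all add: tight_def)
qed

lemma tight_empty: "G {} = 0 \<Longrightarrow> tight u G {}" by (simp add: tight_def)
lemma tight_UNIV: "u \<in> base_polytope G \<Longrightarrow> tight u G UNIV" by (simp add: tight_def bp_sum)

lemma sum_compl_split:
  fixes f :: "'n::finite \<Rightarrow> real"
  shows "sum f UNIV = sum f S + sum f (- S)"
proof -
  have "UNIV = S \<union> - S" by blast
  then have "sum f UNIV = sum f (S \<union> - S)" by simp
  also have "\<dots> = sum f S + sum f (- S)" by (rule sum.union_disjoint) auto
  finally show ?thesis .
qed

lemma closed_set_bound:
  fixes u y :: "'n::finite \<Rightarrow> real"
  assumes sm: "submodular G" and G0: "G {} = 0"
    and u: "u \<in> base_polytope G" and y: "y \<in> base_polytope G"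
    and cl: "\<And>j k. j \<in> X \<Longrightarrow> u j > y j \<Longrightarrow> u k < y k \<Longrightarrow> exch u G j k \<Longrightarrow> k \<in> X"
  shows "sum (\<lambda>x. u x - y x) X \<le> 0"
proof -
  define J where "J = {j \<in> X. u j > y j}"
  define A where "A = {S. tight u G S}"
  define Z where "Z = \<Union>{S. tight u G S \<and> S \<inter> J = {}}"
  have unA: "S \<union> T \<in> A" if "S \<in> A" "T \<in> A" for S T
    using tight_un_int(1)[OF sm u] that by (simp add: A_def)
  have inA: "S \<inter> T \<in> A" if "S \<in> A" "T \<in> A" for S T
    using tight_un_int(2)[OF sm u] that by (simp add: A_def)
  have Zt: "tight u G Z"
  proof -
    have "\<Union>{S. tight u G S \<and> S \<inter> J = {}} \<in> A"
      by (rule union_closed_mem[OF _ _ _ unA]) (use tight_empty[of G u, OF G0] in \<open>auto simp: A_def\<close>)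
    then show ?thesis by (simp add: A_def Z_def)
  qed
  have ZJ: "Z \<inter> J = {}" unfolding Z_def by blast
  have key: "x \<in> Z" if "x \<notin> X" "u x < y x" for x
  proof (cases "J = {}")
    case True
    then have "UNIV \<in> {S. tight u G S \<and> S \<inter> J = {}}" using tight_UNIV[OF u] by simp
    then show ?thesis unfolding Z_def by blast
  next
    case False
    have "\<forall>j\<in>J. \<exists>S. tight u G S \<and> x \<in> S \<and> j \<notin> S"
    proof
      fix j assume j: "j \<in> J"
      have "\<not> exch u G j x"
      proof
        assume "exch u G j x"
        then have "x \<in> X" using cl[of j x] j that by (simp add: J_def)
        with that show False by simp
      qed
      then obtain S where "x \<in> S" "j \<notin> S" "\<not> sum u S < G S" unfolding exch_def by blast
      moreover have "sum u S \<le> G S" using u by (rule bp_le)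
      ultimately show "\<exists>S. tight u G S \<and> x \<in> S \<and> j \<notin> S" by (auto simp: tight_def)
    qed
    then obtain SS where SS: "\<And>j. j \<in> J \<Longrightarrow> tight u G (SS j) \<and> x \<in> SS j \<and> j \<notin> SS j" by metis
    have "\<Inter>(SS ` J) \<in> A"
      by (rule inter_closed_mem[OF _ _ _ inA]) (use False SS in \<open>auto simp: A_def\<close>)
    then have "tight u G (\<Inter>(SS ` J))" by (simp add: A_def)
    moreover have "\<Inter>(SS ` J) \<inter> J = {}" using SS by blast
    moreover have "x \<in> \<Inter>(SS ` J)" using SS by blast
    ultimately show ?thesis unfolding Z_def by blast
  qed
  define v where "v x = u x - y x" for x
  have vZ: "sum v Z \<ge> 0"
    using Zt bp_le[OF y, of Z] by (simp add: v_def sum_subtractf tight_def)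
  have vU: "sum v UNIV = 0" using bp_sum[OF u] bp_sum[OF y] by (simp add: v_def sum_subtractf)
  have "sum v X = sum v (X \<inter> Z) + sum v (X - Z)"
    by (metis Int_Diff_Un Int_Diff_disjoint finite sum.union_disjoint)
  also have "sum v (X \<inter> Z) \<le> 0"
  proof (rule sum_nonpos)
    fix x assume "x \<in> X \<inter> Z"
    then have "x \<notin> J" using ZJ by blast
    with \<open>x \<in> X \<inter> Z\<close> show "v x \<le> 0" by (auto simp: J_def v_def)
  qed
  also have "sum v (X - Z) \<le> sum v (X - Z) + sum v (- X - Z)"
  proof -
    have "sum v (- X - Z) \<ge> 0"
    proof (rule sum_nonneg)
      fix x assume "x \<in> - X - Z"
      then show "0 \<le> v x" using key[of x] by (force simp: v_def)
    qed
    then show ?thesis by simp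
  qed
  also have "sum v (X - Z) + sum v (- X - Z) = sum v (- Z)"
  proof -
    have "- Z = (X - Z) \<union> (- X - Z)" by blast
    moreover have "(X - Z) \<inter> (- X - Z) = {}" by blast
    ultimately show ?thesis by (simp add: sum.union_disjoint)
  qed
  also have "sum v (- Z) = - sum v Z" using vU sum_compl_split[of v Z] by simp
  finally show ?thesis using vZ by (simp add: v_def)
qed

definition Psi :: "nat \<Rightarrow> (nat \<Rightarrow> 'n::finite \<Rightarrow> real) \<Rightarrow> (nat \<Rightarrow> 'n \<Rightarrow> real) \<Rightarrow> real" where
  "Psi R y z = (\<Sum>r<R. \<Sum>i\<in>UNIV. \<bar>z r i - y r i\<bar>)"

definition arcrel :: "nat \<Rightarrow> (nat \<Rightarrow> 'n::finite set \<Rightarrow> real) \<Rightarrow> (nat \<Rightarrow> 'n \<Rightarrow> real) \<Rightarrow> (nat \<Rightarrow> 'n \<Rightarrow> real) \<Rightarrow> 'n \<Rightarrow> 'n \<Rightarrow> bool" where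
  "arcrel R F y z j k \<longleftrightarrow> (\<exists>r<R. z r j > y r j \<and> z r k < y r k \<and> exch (z r) (F r) j k)"

definition goodc :: "nat \<Rightarrow> (nat \<Rightarrow> 'n::finite set \<Rightarrow> real) \<Rightarrow> (nat \<Rightarrow> 'n \<Rightarrow> real) \<Rightarrow> (nat \<Rightarrow> 'n \<Rightarrow> real) \<Rightarrow> (nat \<Rightarrow> 'n \<Rightarrow> 'n \<Rightarrow> real) \<Rightarrow> bool" where
  "goodc R F y z c \<longleftrightarrow> (\<forall>r j k. 0 \<le> c r j k) \<and>
     (\<forall>r j k. c r j k \<noteq> 0 \<longrightarrow> r < R \<and> z r j > y r j \<and> z r k < y r k \<and> exch (z r) (F r) j k) \<and>
     (\<exists>r j k. c r j k \<noteq> 0)"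

definition netc :: "nat \<Rightarrow> (nat \<Rightarrow> 'n::finite \<Rightarrow> 'n \<Rightarrow> real) \<Rightarrow> 'n \<Rightarrow> real" where
  "netc R c x = (\<Sum>r<R. (\<Sum>j\<in>UNIV. c r j x) - (\<Sum>k\<in>UNIV. c r x k))"

lemma netc_add: "netc R (\<lambda>r j k. c r j k + d r j k) x = netc R c x + netc R d x"
  by (simp add: netc_def sum.distrib algebra_simps sum_subtractf)

lemma netc_single:
  fixes a b :: "'n::finite"
  assumes "r0 < R"
  shows "netc R (\<lambda>r j k. if r = r0 \<and> j = a \<and> k = b then 1 else 0) x
     = (if x = b then 1 else 0) - (if x = a then 1 else 0)"
proof -
  have "netc R (\<lambda>r j k. if r = r0 \<and> j = a \<and> k = b then 1 else 0) x
     = (\<Sum>r<R. if r = r0 then (if x = b then 1 else 0) - (if x = a then 1 else 0) else 0)"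
    unfolding netc_def by (intro sum.cong refl) (auto simp: sum.delta)
  also have "\<dots> = (if x = b then 1 else 0) - (if x = a then 1 else 0)"
    using assms by (simp add: sum.delta)
  finally show ?thesis .
qed

lemma path_circ:
  assumes "(arcrel R F y z)\<^sup>+\<^sup>+ a b"
  shows "\<exists>c. goodc R F y z c \<and> (\<forall>x. netc R c x = (if x = b then 1 else 0) - (if x = a then 1 else 0))"
  using assms
proof (induction rule: tranclp_induct)
  case (base b)
  then obtain r where r: "r < R" "z r a > y r a" "z r b < y r b" "exch (z r) (F r) a b"
    unfolding arcrel_def by blast
  define c where "c = (\<lambda>r' j k. if r' = r \<and> j = a \<and> k = b then (1::real) else 0)"
  have "goodc R F y z c" unfolding goodc_def c_def using r by auto
  moreover have "\<forall>x. netc R c x = (if x = b then 1 else 0) - (if x = a then 1 else 0)"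
    unfolding c_def using netc_single[OF r(1)] by blast
  ultimately show ?case by blast
next
  case (step b d)
  then obtain c where c: "goodc R F y z c" "\<forall>x. netc R c x = (if x = b then 1 else 0) - (if x = a then 1 else 0)"
    by blast
  from step obtain r where r: "r < R" "z r b > y r b" "z r d < y r d" "exch (z r) (F r) b d"
    unfolding arcrel_def by blast
  define e where "e = (\<lambda>r' j k. if r' = r \<and> j = b \<and> k = d then (1::real) else 0)"
  define c' where "c' = (\<lambda>r' j k. c r' j k + e r' j k)"
  have "goodc R F y z c'"
    using c(1) r unfolding goodc_def c'_def e_def
    by (smt (verit, ccfv_threshold))
  moreover have "\<forall>x. netc R c' x = (if x = d then 1 else 0) - (if x = a then 1 else 0)"
  proof
    fix x
    have "netc R c' x = netc R c x + netc R e x" unfolding c'_def by (rule netc_add)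
    also have "netc R e x = (if x = d then 1 else 0) - (if x = b then 1 else 0)"
      unfolding e_def by (rule netc_single[OF r(1)])
    finally show "netc R c' x = (if x = d then 1 else 0) - (if x = a then 1 else 0)" using c(2) by simp
  qed
  ultimately show ?case by blast
qed

lemma ev_le: "(0::real) < b \<Longrightarrow> eventually (\<lambda>e. e * a \<le> b) (at_right 0)"
proof -
  assume b: "0 < b"
  have "((\<lambda>e. e * a) \<longlongrightarrow> 0 * a) (at_right (0::real))"
    by (intro tendsto_intros)
  then have "eventually (\<lambda>e. e * a < b) (at_right (0::real))"
    using order_tendstoD(2) b by fastforce
  then show ?thesis by (rule eventually_mono) simp
qed

lemma abs_shrink:
  fixes v d e :: real
  assumes "0 \<le> e" "v > 0 \<longrightarrow> d \<le> 0" "v < 0 \<longrightarrow> d \<ge> 0" "v = 0 \<longrightarrow> d = 0" "e * \<bar>d\<bar> \<le> \<bar>v\<bar>"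
  shows "\<bar>v + e * d\<bar> = \<bar>v\<bar> - e * \<bar>d\<bar>"
proof (cases "v > 0")
  case True
  then have "d \<le> 0" using assms by simp
  then have "e * \<bar>d\<bar> = - (e * d)" using assms(1) by (simp add: abs_if)
  then show ?thesis using assms True by (auto simp: abs_if)
next
  case False
  show ?thesis
  proof (cases "v < 0")
    case True
    then have "d \<ge> 0" using assms by simp
    then have ed: "e * \<bar>d\<bar> = e * d" using assms(1) by simp
    then have "v + e * d \<le> 0" using assms(5) True by linarith
    moreover have dd: "\<bar>d\<bar> = d" using \<open>d \<ge> 0\<close> by simp
    ultimately show ?thesis using True by (simp add: abs_of_nonpos abs_of_neg)
  next
    case False
    then show ?thesis using assms \<open>\<not> v > 0\<close> by simp
  qed
qed

lemma ind_sum: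
  fixes c :: "'n::finite \<Rightarrow> real"
  shows "(\<Sum>k\<in>UNIV. c k * (if k \<in> S then 1 else 0)) = sum c S"
proof -
  have "(\<Sum>k\<in>UNIV. c k * (if k \<in> S then 1 else 0)) = (\<Sum>k\<in>UNIV. if k \<in> S then c k else 0)"
    by (intro sum.cong) auto
  also have "\<dots> = sum c S" using sum.inter_restrict[of UNIV c S] by simp
  finally show ?thesis .
qed

lemma sum_in_S_swap:
  fixes c :: "'n::finite \<Rightarrow> 'n \<Rightarrow> real"
  shows "(\<Sum>x\<in>S. \<Sum>j\<in>UNIV. c j x) = (\<Sum>j\<in>UNIV. \<Sum>k\<in>UNIV. c j k * (if k \<in> S then 1 else 0))"
  by (simp add: ind_sum sum.swap[of _ S])

lemma sum_in_S_swap2: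
  fixes c :: "'n::finite \<Rightarrow> 'n \<Rightarrow> real"
  shows "(\<Sum>x\<in>S. \<Sum>k\<in>UNIV. c x k) = (\<Sum>j\<in>UNIV. \<Sum>k\<in>UNIV. c j k * (if j \<in> S then 1 else 0))"
proof -
  have "(\<Sum>x\<in>S. \<Sum>k\<in>UNIV. c x k) = (\<Sum>j\<in>UNIV. if j \<in> S then (\<Sum>k\<in>UNIV. c j k) else 0)"
    by (simp add: sum.inter_restrict[symmetric])
  also have "\<dots> = (\<Sum>j\<in>UNIV. \<Sum>k\<in>UNIV. c j k * (if j \<in> S then 1 else 0))"
    by (intro sum.cong refl) (simp add: sum_distrib_right[symmetric])
  finally show ?thesis .
qed

lemma no_cycle:
  fixes R :: nat and F :: "nat \<Rightarrow> 'n::finite set \<Rightarrow> real" and y z :: "nat \<Rightarrow> 'n \<Rightarrow> real"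
  assumes zB: "z \<in> prod_base R F"
    and minz: "\<forall>z'\<in>prod_base R F. Aop R z' = Aop R z \<longrightarrow> Psi R y z \<le> Psi R y z'"
  shows "\<not> (arcrel R F y z)\<^sup>+\<^sup>+ i i"
proof
  assume "(arcrel R F y z)\<^sup>+\<^sup>+ i i"
  from path_circ[OF this] obtain c where good: "goodc R F y z c" and net: "\<And>x. netc R c x = 0"
    by auto
  have cnn: "\<And>r j k. 0 \<le> c r j k" using good by (simp add: goodc_def)
  have cnz: "\<And>r j k. c r j k \<noteq> 0 \<Longrightarrow> r < R \<and> z r j > y r j \<and> z r k < y r k \<and> exch (z r) (F r) j k"
    using good unfolding goodc_def by blast
  define D where "D r x = (\<Sum>j\<in>UNIV. c r j x) - (\<Sum>k\<in>UNIV. c r x k)" for r x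
  define v where "v r x = z r x - y r x" for r x
  have D1: "D r x = 0" if "\<not> r < R" for r x
  proof -
    have "\<And>j k. c r j k = 0" using cnz that by blast
    then show ?thesis by (simp add: D_def)
  qed
  have D2: "(\<Sum>x\<in>UNIV. D r x) = 0" for r
    unfolding D_def by (simp add: sum_subtractf sum.swap[of "\<lambda>j x. c r j x"])
  have D3: "(\<Sum>x\<in>S. D r x) \<le> 0" if "tight (z r) (F r) S" for r S
  proof -
    have "(\<Sum>x\<in>S. D r x) = (\<Sum>j\<in>UNIV. \<Sum>k\<in>UNIV. c r j k * ((if k \<in> S then 1 else 0) - (if j \<in> S then 1 else 0)))"
      unfolding D_def sum_subtractf sum_in_S_swap[where S=S and c="c r"] sum_in_S_swap2[where S=S and c="c r"]
      by (simp add: sum_subtractf[symmetric] right_diff_distrib)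
    also have "\<dots> \<le> 0"
    proof (intro sum_nonpos)
      fix j k
      show "c r j k * ((if k \<in> S then 1 else 0) - (if j \<in> S then 1 else 0)) \<le> 0"
      proof (cases "c r j k = 0")
        case False
        then have "exch (z r) (F r) j k" using cnz by blast
        then have "\<not> (k \<in> S \<and> j \<notin> S)" using that unfolding exch_def tight_def by auto
        then show ?thesis using cnn[of r j k] by (auto simp: mult_nonneg_nonpos)
      qed simp
    qed
    finally show ?thesis .
  qed
  have D4: "(v r x > 0 \<longrightarrow> D r x \<le> 0) \<and> (v r x < 0 \<longrightarrow> D r x \<ge> 0) \<and> (v r x = 0 \<longrightarrow> D r x = 0)" for r x
  proof -
    have a: "(\<Sum>j\<in>UNIV. c r j x) = 0" if "\<not> v r x < 0"
    proof -
      have "\<And>j. c r j x = 0" using cnz that by (force simp: v_def)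
      then show ?thesis by simp
    qed
    have b: "(\<Sum>k\<in>UNIV. c r x k) = 0" if "\<not> v r x > 0"
    proof -
      have "\<And>k. c r x k = 0" using cnz that by (force simp: v_def)
      then show ?thesis by simp
    qed
    have "(\<Sum>j\<in>UNIV. c r j x) \<ge> 0" "(\<Sum>k\<in>UNIV. c r x k) \<ge> 0" using cnn by (simp_all add: sum_nonneg)
    then show ?thesis using a b by (auto simp: D_def)
  qed
  obtain r0 j0 k0 where c0: "c r0 j0 k0 \<noteq> 0" using good unfolding goodc_def by blast
  have r0: "r0 < R" "v r0 j0 > 0" using cnz[OF c0] by (auto simp: v_def)
  have D5: "D r0 j0 < 0"
  proof -
    have "(\<Sum>j\<in>UNIV. c r0 j j0) = 0"
    proof -
      have "\<And>j. c r0 j j0 = 0" using cnz r0(2) by (force simp: v_def)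
      then show ?thesis by simp
    qed
    moreover have "c r0 j0 k0 \<le> (\<Sum>k\<in>UNIV. c r0 j0 k)"
      by (rule member_le_sum) (use cnn in auto)
    moreover have "c r0 j0 k0 > 0" using cnn[of r0 j0 k0] c0 by simp
    ultimately show ?thesis by (simp add: D_def)
  qed
  have D6: "(\<Sum>r<R. D r x) = 0" for x using net[of x] by (simp add: netc_def D_def)
  define P where "P e \<longleftrightarrow> 0 < e \<and>
      (\<forall>p\<in>{..<R} \<times> (UNIV :: 'n set set). \<not> tight (z (fst p)) (F (fst p)) (snd p) \<longrightarrow>
          e * (\<Sum>x\<in>snd p. D (fst p) x) \<le> F (fst p) (snd p) - sum (z (fst p)) (snd p)) \<and>
      (\<forall>p\<in>{..<R} \<times> (UNIV :: 'n set). v (fst p) (snd p) \<noteq> 0 \<longrightarrow>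
          e * \<bar>D (fst p) (snd p)\<bar> \<le> \<bar>v (fst p) (snd p)\<bar>)" for e
  have "eventually P (at_right 0)"
  proof -
    have e1: "eventually (\<lambda>e. \<forall>p\<in>{..<R} \<times> (UNIV :: 'n set set). \<not> tight (z (fst p)) (F (fst p)) (snd p) \<longrightarrow>
          e * (\<Sum>x\<in>snd p. D (fst p) x) \<le> F (fst p) (snd p) - sum (z (fst p)) (snd p)) (at_right (0::real))"
    proof (rule eventually_ball_finite, simp, rule ballI)
      fix p :: "nat \<times> 'n set" assume p: "p \<in> {..<R} \<times> UNIV"
      show "eventually (\<lambda>e. \<not> tight (z (fst p)) (F (fst p)) (snd p) \<longrightarrow>
          e * (\<Sum>x\<in>snd p. D (fst p) x) \<le> F (fst p) (snd p) - sum (z (fst p)) (snd p)) (at_right 0)"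
      proof (cases "tight (z (fst p)) (F (fst p)) (snd p)")
        case False
        have "z (fst p) \<in> base_polytope (F (fst p))" using zB p by (auto simp: prod_base_def)
        then have "sum (z (fst p)) (snd p) \<le> F (fst p) (snd p)" by (rule bp_le)
        with False have "0 < F (fst p) (snd p) - sum (z (fst p)) (snd p)" by (simp add: tight_def)
        from ev_le[OF this, of "\<Sum>x\<in>snd p. D (fst p) x"] show ?thesis by (rule eventually_mono) simp
      qed simp
    qed
    have e2: "eventually (\<lambda>e. \<forall>p\<in>{..<R} \<times> (UNIV :: 'n set). v (fst p) (snd p) \<noteq> 0 \<longrightarrow>
          e * \<bar>D (fst p) (snd p)\<bar> \<le> \<bar>v (fst p) (snd p)\<bar>) (at_right (0::real))"
    proof (rule eventually_ball_finite, simp, rule ballI)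
      fix p :: "nat \<times> 'n" assume p: "p \<in> {..<R} \<times> UNIV"
      show "eventually (\<lambda>e. v (fst p) (snd p) \<noteq> 0 \<longrightarrow>
          e * \<bar>D (fst p) (snd p)\<bar> \<le> \<bar>v (fst p) (snd p)\<bar>) (at_right 0)"
      proof (cases "v (fst p) (snd p) = 0")
        case False
        then have "0 < \<bar>v (fst p) (snd p)\<bar>" by simp
        from ev_le[OF this, of "\<bar>D (fst p) (snd p)\<bar>"] show ?thesis by (rule eventually_mono) simp
      qed simp
    qed
    have e3: "eventually (\<lambda>e. 0 < e) (at_right (0::real))" by (rule eventually_at_right_less)
    show ?thesis using eventually_conj[OF e3 eventually_conj[OF e1 e2]] unfolding P_def by simp
  qed
  then obtain e where Pe: "P e" using eventually_happens[of P "at_right (0::real)"] by auto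
  then have epos: "0 < e" by (simp add: P_def)
  define z' where "z' r x = z r x + e * D r x" for r x
  have z'B: "z' \<in> prod_base R F"
    unfolding prod_base_def
  proof (intro CollectI conjI allI impI)
    fix r assume r: "R \<le> r"
    then show "z' r = (\<lambda>_. 0)" using zB D1 by (auto simp: z'_def prod_base_def)
  next
    fix r assume r: "r < R"
    have zr: "z r \<in> base_polytope (F r)" using zB r by (auto simp: prod_base_def)
    have sS: "sum (z' r) S = sum (z r) S + e * (\<Sum>x\<in>S. D r x)" for S
      by (simp add: z'_def sum.distrib sum_distrib_left)
    show "z' r \<in> base_polytope (F r)"
      unfolding base_polytope_def
    proof (intro CollectI conjI allI)
      fix S
      show "sum (z' r) S \<le> F r S"
      proof (cases "tight (z r) (F r) S")
        case True
        then have "e * (\<Sum>x\<in>S. D r x) \<le> 0" using D3[OF True] epos by (simp add: mult_nonneg_nonpos)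
        then show ?thesis using True sS[of S] by (simp add: tight_def)
      next
        case False
        then have "e * (\<Sum>x\<in>S. D r x) \<le> F r S - sum (z r) S" using Pe r unfolding P_def by auto
        then show ?thesis using sS[of S] by simp
      qed
    next
      show "sum (z' r) UNIV = F r UNIV" using sS[of UNIV] D2[of r] bp_sum[OF zr] by simp
    qed
  qed
  have Az': "Aop R z' = Aop R z"
  proof
    fix x
    have "Aop R z' x = Aop R z x + e * (\<Sum>r<R. D r x)"
      by (simp add: Aop_def z'_def sum.distrib sum_distrib_left)
    then show "Aop R z' x = Aop R z x" using D6 by simp
  qed
  have Psi': "Psi R y z' = Psi R y z - e * (\<Sum>r<R. \<Sum>x\<in>UNIV. \<bar>D r x\<bar>)"
  proof -
    have "\<bar>z' r x - y r x\<bar> = \<bar>z r x - y r x\<bar> - e * \<bar>D r x\<bar>" if "r < R" for r x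
    proof -
      have "z' r x - y r x = v r x + e * D r x" by (simp add: z'_def v_def)
      moreover have "e * \<bar>D r x\<bar> \<le> \<bar>v r x\<bar>"
      proof (cases "v r x = 0")
        case True then show ?thesis using D4[of r x] by simp
      next
        case False then show ?thesis using Pe that unfolding P_def by auto
      qed
      ultimately show ?thesis using abs_shrink[of e "v r x" "D r x"] epos D4[of r x] by (simp add: v_def)
    qed
    then show ?thesis unfolding Psi_def
      by (simp add: sum_subtractf sum_distrib_left)
  qed
  have pos: "(\<Sum>r<R. \<Sum>x\<in>UNIV. \<bar>D r x\<bar>) > 0"
  proof -
    have "\<bar>D r0 j0\<bar> \<le> (\<Sum>x\<in>UNIV. \<bar>D r0 x\<bar>)" by (rule member_le_sum) auto
    also have "\<dots> \<le> (\<Sum>r<R. \<Sum>x\<in>UNIV. \<bar>D r x\<bar>)"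
      by (rule member_le_sum[of r0 "{..<R}" "\<lambda>r. \<Sum>x\<in>UNIV. \<bar>D r x\<bar>"]) (use r0 in \<open>auto intro: sum_nonneg\<close>)
    finally show ?thesis using D5 by simp
  qed
  have "Psi R y z \<le> Psi R y z'" using minz z'B Az' by blast
  moreover have "e * (\<Sum>r<R. \<Sum>x\<in>UNIV. \<bar>D r x\<bar>) > 0" using pos epos by simp
  ultimately show False using Psi' by linarith
qed

lemma P_bound:
  fixes R :: nat and F :: "nat \<Rightarrow> 'n::finite set \<Rightarrow> real" and y z :: "nat \<Rightarrow> 'n \<Rightarrow> real"
  assumes subm: "\<forall>r<R. submodular (F r) \<and> F r {} = 0"
    and yB: "y \<in> prod_base R F" and zB: "z \<in> prod_base R F"
    and minz: "\<forall>z'\<in>prod_base R F. Aop R z' = Aop R z \<longrightarrow> Psi R y z \<le> Psi R y z'"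
  shows "(\<Sum>r<R. max (z r i - y r i) 0) \<le> (\<Sum>x\<in>UNIV. max (- (Aop R z x - Aop R y x)) 0)"
proof -
  let ?arc = "arcrel R F y z"
  define U where "U = {x. ?arc\<^sup>*\<^sup>* i x}"
  define W where "W = U - {i}"
  have iU: "i \<in> U" by (simp add: U_def)
  have nc: "\<not> ?arc\<^sup>+\<^sup>+ i i" by (rule no_cycle[OF zB minz])
  have zr: "z r \<in> base_polytope (F r)" "y r \<in> base_polytope (F r)" if "r < R" for r
    using zB yB that by (auto simp: prod_base_def)
  have sU: "(\<Sum>x\<in>U. z r x - y r x) \<le> 0" if r: "r < R" for r
  proof (rule closed_set_bound[of "F r"])
    show "submodular (F r)" "F r {} = 0" using subm r by auto
    show "z r \<in> base_polytope (F r)" "y r \<in> base_polytope (F r)" using zr[OF r] by auto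
    fix j k assume "j \<in> U" "y r j < z r j" "z r k < y r k" "exch (z r) (F r) j k"
    then have "?arc j k" using r unfolding arcrel_def by blast
    with \<open>j \<in> U\<close> show "k \<in> U" unfolding U_def by (simp add: rtranclp.rtrancl_into_rtrancl)
  qed
  have sW: "(\<Sum>x\<in>W. z r x - y r x) \<le> 0" if r: "r < R" for r
  proof (rule closed_set_bound[of "F r"])
    show "submodular (F r)" "F r {} = 0" using subm r by auto
    show "z r \<in> base_polytope (F r)" "y r \<in> base_polytope (F r)" using zr[OF r] by auto
    fix j k assume "j \<in> W" "y r j < z r j" "z r k < y r k" "exch (z r) (F r) j k"
    then have a: "?arc j k" using r unfolding arcrel_def by blast
    have ij: "?arc\<^sup>*\<^sup>* i j" using \<open>j \<in> W\<close> by (simp add: W_def U_def)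
    have "k \<noteq> i"
    proof
      assume "k = i"
      then have "?arc\<^sup>+\<^sup>+ i i" using rtranclp_into_tranclp1[OF ij a] by simp
      with nc show False by simp
    qed
    moreover have "?arc\<^sup>*\<^sup>* i k" using ij a by (simp add: rtranclp.rtrancl_into_rtrancl)
    ultimately show "k \<in> W" by (simp add: W_def U_def)
  qed
  have split: "(\<Sum>x\<in>U. z r x - y r x) = (z r i - y r i) + (\<Sum>x\<in>W. z r x - y r x)" for r
    unfolding W_def using iU by (simp add: sum.remove)
  have "(\<Sum>r<R. max (z r i - y r i) 0) \<le> (\<Sum>r<R. - (\<Sum>x\<in>W. z r x - y r x))"
  proof (rule sum_mono)
    fix r assume "r \<in> {..<R}"
    then have "r < R" by simp
    then show "max (z r i - y r i) 0 \<le> - (\<Sum>x\<in>W. z r x - y r x)"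
      using sU[of r] sW[of r] split[of r] by linarith
  qed
  also have "\<dots> = (\<Sum>x\<in>W. - (Aop R z x - Aop R y x))"
  proof -
    have "(\<Sum>r<R. \<Sum>x\<in>W. z r x - y r x) = (\<Sum>x\<in>W. \<Sum>r<R. z r x - y r x)" by (rule sum.swap)
    also have "\<dots> = (\<Sum>x\<in>W. Aop R z x - Aop R y x)" by (simp add: Aop_def sum_subtractf)
    finally have "(\<Sum>r<R. \<Sum>x\<in>W. z r x - y r x) = (\<Sum>x\<in>W. Aop R z x - Aop R y x)" .
    then show ?thesis by (simp only: sum_negf)
  qed
  also have "\<dots> \<le> (\<Sum>x\<in>W. max (- (Aop R z x - Aop R y x)) 0)"
    by (rule sum_mono) simp
  also have "\<dots> \<le> (\<Sum>x\<in>UNIV. max (- (Aop R z x - Aop R y x)) 0)"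
    by (rule sum_mono2) auto
  finally show ?thesis .
qed

definition negF :: "(nat \<Rightarrow> 'n::finite set \<Rightarrow> real) \<Rightarrow> nat \<Rightarrow> 'n set \<Rightarrow> real" where
  "negF F r S = F r (- S) - F r UNIV"

definition negy :: "(nat \<Rightarrow> 'n \<Rightarrow> real) \<Rightarrow> nat \<Rightarrow> 'n \<Rightarrow> real" where
  "negy y r i = - y r i"

lemma negF_submod:
  fixes F :: "nat \<Rightarrow> 'n::finite set \<Rightarrow> real"
  assumes "submodular (F r)" shows "submodular (negF F r)"
proof -
  have h: "F r (X \<union> Y) + F r (X \<inter> Y) \<le> F r X + F r Y" for X Y using assms by (simp add: submodular_def)
  show ?thesis unfolding submodular_def negF_def
  proof (intro allI)
    fix A B :: "'n set"
    have "- (A \<union> B) = - A \<inter> - B" "- (A \<inter> B) = - A \<union> - B" by auto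
    then show "F r (- (A \<union> B)) - F r UNIV + (F r (- (A \<inter> B)) - F r UNIV)
        \<le> F r (- A) - F r UNIV + (F r (- B) - F r UNIV)" using h[of "- A" "- B"] by simp
  qed
qed

lemma negF_empty: "negF F r {} = 0" by (simp add: negF_def)

lemma sum_compl_split2:
  fixes f :: "'n::finite \<Rightarrow> real"
  shows "sum f (- S) = sum f UNIV - sum f S"
  using sum_compl_split[of f S] by simp

lemma bp_neg1:
  fixes u :: "'n::finite \<Rightarrow> real"
  assumes "u \<in> base_polytope (F r)" "F r {} = 0"
  shows "(\<lambda>i. - u i) \<in> base_polytope (negF F r)"
  unfolding base_polytope_def negF_def
proof (intro CollectI conjI allI)
  fix S
  have "sum u (- S) \<le> F r (- S)" using assms(1) by (rule bp_le)
  then show "(\<Sum>i\<in>S. - u i) \<le> F r (- S) - F r UNIV"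
    using sum_compl_split2[of u S] bp_sum[OF assms(1)] by (simp add: sum_negf)
next
  show "(\<Sum>i\<in>UNIV. - u i) = F r (- UNIV) - F r UNIV"
    using bp_sum[OF assms(1)] assms(2) by (simp add: sum_negf)
qed

lemma bp_neg2:
  fixes u :: "'n::finite \<Rightarrow> real"
  assumes "(\<lambda>i. - u i) \<in> base_polytope (negF F r)" "F r {} = 0"
  shows "u \<in> base_polytope (F r)"
proof -
  have tot: "sum u UNIV = F r UNIV"
    using bp_sum[OF assms(1)] assms(2) by (simp add: negF_def sum_negf)
  show ?thesis unfolding base_polytope_def
  proof (intro CollectI conjI allI tot)
    fix S
    have "(\<Sum>i\<in>- S. - u i) \<le> negF F r (- S)" using assms(1) by (rule bp_le)
    then have "- sum u (- S) \<le> F r S - F r UNIV" by (simp add: negF_def sum_negf)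
    then show "sum u S \<le> F r S" using sum_compl_split2[of u S] tot by simp
  qed
qed

lemma prod_base_neg1:
  assumes "y \<in> prod_base R F" "\<forall>r<R. F r {} = 0"
  shows "negy y \<in> prod_base R (negF F)"
proof -
  have "negy y r \<in> base_polytope (negF F r)" if "r < R" for r
    using assms that bp_neg1[of "y r" F r] unfolding prod_base_def negy_def by auto
  moreover have "negy y r = (\<lambda>_. 0)" if "R \<le> r" for r
    using assms that unfolding prod_base_def negy_def by auto
  ultimately show ?thesis by (simp add: prod_base_def)
qed

lemma prod_base_neg2:
  assumes "negy y \<in> prod_base R (negF F)" "\<forall>r<R. F r {} = 0"
  shows "y \<in> prod_base R F"
proof -
  have "y r \<in> base_polytope (F r)" if "r < R" for r
    using assms that bp_neg2[of "y r" F r] unfolding prod_base_def negy_def by auto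
  moreover have "y r = (\<lambda>_. 0)" if "R \<le> r" for r
    using assms that unfolding prod_base_def negy_def by (auto simp: fun_eq_iff)
  ultimately show ?thesis by (simp add: prod_base_def)
qed

lemma negy_negy[simp]: "negy (negy y) = y" by (simp add: negy_def fun_eq_iff)
lemma Aop_negy: "Aop R (negy y) x = - Aop R y x" by (simp add: Aop_def negy_def sum_negf)
lemma Psi_negy: "Psi R (negy y) (negy z) = Psi R y z"
proof -
  have "\<bar>- a - - b\<bar> = \<bar>a - b\<bar>" for a b :: real by arith
  then show ?thesis unfolding Psi_def negy_def by simp
qed

lemma N_bound:
  fixes R :: nat and F :: "nat \<Rightarrow> 'n::finite set \<Rightarrow> real" and y z :: "nat \<Rightarrow> 'n \<Rightarrow> real"
  assumes subm: "\<forall>r<R. submodular (F r) \<and> F r {} = 0"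
    and yB: "y \<in> prod_base R F" and zB: "z \<in> prod_base R F"
    and minz: "\<forall>z'\<in>prod_base R F. Aop R z' = Aop R z \<longrightarrow> Psi R y z \<le> Psi R y z'"
  shows "(\<Sum>r<R. max (- (z r i - y r i)) 0) \<le> (\<Sum>x\<in>UNIV. max (Aop R z x - Aop R y x) 0)"
proof -
  have F0: "\<forall>r<R. F r {} = 0" using subm by simp
  have subm': "\<forall>r<R. submodular (negF F r) \<and> negF F r {} = 0"
  proof (intro allI impI conjI)
    fix r assume "r < R"
    then have "submodular (F r)" using subm by simp
    then show "submodular (negF F r)" by (rule negF_submod)
    show "negF F r {} = 0" by (rule negF_empty)
  qed
  have minz': "\<forall>z'\<in>prod_base R (negF F). Aop R z' = Aop R (negy z) \<longrightarrow> Psi R (negy y) (negy z) \<le> Psi R (negy y) z'"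
  proof (intro ballI impI)
    fix z' assume z': "z' \<in> prod_base R (negF F)" "Aop R z' = Aop R (negy z)"
    have "negy (negy z') \<in> prod_base R (negF F)" using z'(1) by simp
    then have "negy z' \<in> prod_base R F" using F0 by (rule prod_base_neg2)
    moreover have "Aop R (negy z') = Aop R z" using z'(2) by (simp add: fun_eq_iff Aop_negy)
    ultimately have "Psi R y z \<le> Psi R y (negy z')" using minz[rule_format, of "negy z'"] by simp
    then show "Psi R (negy y) (negy z) \<le> Psi R (negy y) z'"
      using Psi_negy[of R y z] Psi_negy[of R "negy y" z'] by simp
  qed
  have "(\<Sum>r<R. max (negy z r i - negy y r i) 0) \<le> (\<Sum>x\<in>UNIV. max (- (Aop R (negy z) x - Aop R (negy y) x)) 0)"
    by (rule P_bound[OF subm' prod_base_neg1[OF yB F0] prod_base_neg1[OF zB F0] minz'])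
  moreover have "(\<Sum>r<R. max (negy z r i - negy y r i) 0) = (\<Sum>r<R. max (- (z r i - y r i)) 0)"
    by (simp add: negy_def)
  moreover have "(\<Sum>x\<in>UNIV. max (- (Aop R (negy z) x - Aop R (negy y) x)) 0) = (\<Sum>x\<in>UNIV. max (Aop R z x - Aop R y x) 0)"
    by (simp only: Aop_negy) simp
  ultimately show ?thesis by simp
qed

lemma sq_sum_le:
  fixes f :: "'a \<Rightarrow> real"
  assumes "finite A" "\<forall>x\<in>A. 0 \<le> f x"
  shows "(\<Sum>x\<in>A. (f x)\<^sup>2) \<le> (\<Sum>x\<in>A. f x)\<^sup>2"
  using assms
proof (induction A rule: finite_induct)
  case empty then show ?case by simp
next
  case (insert a A)
  have s: "0 \<le> sum f A" using insert by (simp add: sum_nonneg)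
  have "(\<Sum>x\<in>insert a A. (f x)\<^sup>2) = (f a)\<^sup>2 + (\<Sum>x\<in>A. (f x)\<^sup>2)" using insert by simp
  also have "\<dots> \<le> (f a)\<^sup>2 + (sum f A)\<^sup>2" using insert by simp
  also have "\<dots> \<le> (f a + sum f A)\<^sup>2"
    using s insert(4) by (simp add: power2_sum)
  also have "\<dots> = (\<Sum>x\<in>insert a A. f x)\<^sup>2" using insert by simp
  finally show ?case .
qed

lemma continuous_Aop: "continuous_on S (\<lambda>z::nat \<Rightarrow> 'n::finite \<Rightarrow> real. Aop R z x)"
  unfolding Aop_def by (intro continuous_on_sum continuous_on_coord2)

lemma continuous_Psi: "continuous_on S (\<lambda>z::nat \<Rightarrow> 'n::finite \<Rightarrow> real. Psi R y z)"
  unfolding Psi_def by (intro continuous_on_sum continuous_on_rabs continuous_on_diff continuous_on_coord2 continuous_on_const)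

lemma closed_Aop_eq: "closed {z::nat \<Rightarrow> 'n::finite \<Rightarrow> real. Aop R z = a}"
proof -
  have "{z::nat \<Rightarrow> 'n::finite \<Rightarrow> real. Aop R z = a} = {z. \<forall>x. Aop R z x = a x}" by (auto simp: fun_eq_iff)
  moreover have "closed {z::nat \<Rightarrow> 'n::finite \<Rightarrow> real. \<forall>x. Aop R z x = a x}"
    by (intro closed_Collect_all closed_Collect_eq continuous_Aop continuous_on_const)
  ultimately show ?thesis by simp
qed

lemma sum_Aop:
  assumes "y \<in> prod_base R (F :: nat \<Rightarrow> 'n::finite set \<Rightarrow> real)"
  shows "(\<Sum>x\<in>UNIV. Aop R y x) = (\<Sum>r<R. F r UNIV)"
proof -
  have "(\<Sum>x\<in>UNIV. Aop R y x) = (\<Sum>r<R. \<Sum>x\<in>UNIV. y r x)" unfolding Aop_def by (rule sum.swap)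
  also have "\<dots> = (\<Sum>r<R. F r UNIV)"
    by (intro sum.cong refl) (use assms in \<open>auto simp: prod_base_def intro: bp_sum\<close>)
  finally show ?thesis .
qed

lemma exists_good:
  fixes R :: nat and F :: "nat \<Rightarrow> 'n::finite set \<Rightarrow> real" and y z0 :: "nat \<Rightarrow> 'n \<Rightarrow> real"
  assumes subm: "\<forall>r<R. submodular (F r) \<and> F r {} = 0"
    and yB: "y \<in> prod_base R F" and z0B: "z0 \<in> prod_base R F"
  shows "\<exists>z\<in>prod_base R F. Aop R z = Aop R z0 \<and>
    (\<forall>i. (\<Sum>r<R. (z r i - y r i)\<^sup>2) \<le> (\<Sum>x\<in>UNIV. \<bar>Aop R z0 x - Aop R y x\<bar>)\<^sup>2 / 2)"
proof -
  define M where "M = prod_base R F \<inter> {z. Aop R z = Aop R z0}"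
  have "compact M" unfolding M_def using compact_prod_base closed_Aop_eq by (rule compact_Int_closed)
  moreover have "M \<noteq> {}" using z0B by (auto simp: M_def)
  ultimately obtain z where zM: "z \<in> M" and zmin: "\<forall>z'\<in>M. Psi R y z \<le> Psi R y z'"
    using continuous_attains_inf[of M "Psi R y"] continuous_Psi by blast
  have zB: "z \<in> prod_base R F" and Az: "Aop R z = Aop R z0" using zM by (auto simp: M_def)
  have minz: "\<forall>z'\<in>prod_base R F. Aop R z' = Aop R z \<longrightarrow> Psi R y z \<le> Psi R y z'"
    using zmin Az by (auto simp: M_def)
  define d where "d x = Aop R z x - Aop R y x" for x
  define Dp where "Dp = (\<Sum>x\<in>UNIV. max (d x) 0)"
  define Dm where "Dm = (\<Sum>x\<in>UNIV. max (- d x) 0)"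
  have sd: "(\<Sum>x\<in>UNIV. d x) = 0" using sum_Aop[OF zB] sum_Aop[OF yB] by (simp add: d_def sum_subtractf)
  have "Dp - Dm = (\<Sum>x\<in>UNIV. d x)" unfolding Dp_def Dm_def
    by (simp add: sum_subtractf[symmetric]) (intro sum.cong refl, simp add: max_def)
  then have DpDm: "Dp = Dm" using sd by simp
  have "Dp + Dm = (\<Sum>x\<in>UNIV. \<bar>d x\<bar>)" unfolding Dp_def Dm_def
    by (simp add: sum.distrib[symmetric]) (intro sum.cong refl, simp add: max_def)
  then have Dval: "Dp = (\<Sum>x\<in>UNIV. \<bar>d x\<bar>) / 2" "Dm = (\<Sum>x\<in>UNIV. \<bar>d x\<bar>) / 2" using DpDm by simp_all
  have "(\<Sum>r<R. (z r i - y r i)\<^sup>2) \<le> (\<Sum>x\<in>UNIV. \<bar>d x\<bar>)\<^sup>2 / 2" for i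
  proof -
    define P where "P = (\<Sum>r<R. max (z r i - y r i) 0)"
    define N where "N = (\<Sum>r<R. max (- (z r i - y r i)) 0)"
    have P: "P \<le> Dm" unfolding P_def Dm_def d_def by (rule P_bound[OF subm yB zB minz])
    have N: "N \<le> Dp" unfolding N_def Dp_def d_def by (rule N_bound[OF subm yB zB minz])
    have P0: "0 \<le> P" "0 \<le> N" unfolding P_def N_def by (simp_all add: sum_nonneg)
    have "(\<Sum>r<R. (z r i - y r i)\<^sup>2) = (\<Sum>r<R. (max (z r i - y r i) 0)\<^sup>2) + (\<Sum>r<R. (max (- (z r i - y r i)) 0)\<^sup>2)"
      by (simp add: sum.distrib[symmetric]) (intro sum.cong refl, simp add: max_def power2_eq_square algebra_simps)
    also have "\<dots> \<le> P\<^sup>2 + N\<^sup>2" unfolding P_def N_def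
      by (intro add_mono sq_sum_le) auto
    also have "\<dots> \<le> Dm\<^sup>2 + Dp\<^sup>2" using P N P0 by (intro add_mono power_mono) auto
    also have "\<dots> = (\<Sum>x\<in>UNIV. \<bar>d x\<bar>)\<^sup>2 / 2" unfolding Dval by (simp add: power2_eq_square)
    finally show ?thesis .
  qed
  then show ?thesis using zB Az by (auto simp: d_def)
qed

lemma cs_abs:
  fixes d w :: "'n::finite \<Rightarrow> real"
  assumes "\<forall>i. w i > 0"
  shows "(\<Sum>x\<in>UNIV. \<bar>d x\<bar>)\<^sup>2 \<le> (\<Sum>x\<in>UNIV. w x) * (\<Sum>x\<in>UNIV. (d x)\<^sup>2 / w x)"
proof -
  have "(\<Sum>x\<in>UNIV. \<bar>d x\<bar>) = (\<Sum>x\<in>UNIV. sqrt (w x) * (\<bar>d x\<bar> / sqrt (w x)))"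
  proof (intro sum.cong refl)
    fix x
    have "w x > 0" using assms by simp
    then show "\<bar>d x\<bar> = sqrt (w x) * (\<bar>d x\<bar> / sqrt (w x))" by simp
  qed
  moreover have "(\<Sum>x\<in>UNIV. (sqrt (w x))\<^sup>2) = (\<Sum>x\<in>UNIV. w x)"
    using assms by (intro sum.cong refl) (simp add: less_imp_le)
  moreover have "(\<Sum>x\<in>UNIV. (\<bar>d x\<bar> / sqrt (w x))\<^sup>2) = (\<Sum>x\<in>UNIV. (d x)\<^sup>2 / w x)"
  proof (intro sum.cong refl)
    fix x
    have "w x > 0" using assms by simp
    then show "(\<bar>d x\<bar> / sqrt (w x))\<^sup>2 = (d x)\<^sup>2 / w x" by (simp add: power_divide)
  qed
  ultimately show ?thesis
    using Cauchy_Schwarz_ineq_sum[of "\<lambda>x. sqrt (w x)" "\<lambda>x. \<bar>d x\<bar> / sqrt (w x)" UNIV] by simp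
qed

definition bsq :: "nat \<Rightarrow> ('n::finite \<Rightarrow> real) \<Rightarrow> (nat \<Rightarrow> 'n \<Rightarrow> real) \<Rightarrow> real" where
  "bsq R v y = (\<Sum>r<R. \<Sum>i\<in>UNIV. v i * (y r i)\<^sup>2)"

definition qf :: "nat \<Rightarrow> ('n::finite \<Rightarrow> real) \<Rightarrow> (nat \<Rightarrow> 'n \<Rightarrow> real) \<Rightarrow> (nat \<Rightarrow> 'n \<Rightarrow> real) \<Rightarrow> real" where
  "qf R w y z = (1/2) * (\<Sum>i\<in>UNIV. inverse (w i) * (Aop R y i - Aop R z i)\<^sup>2)"

definition lin :: "nat \<Rightarrow> ('n::finite \<Rightarrow> real) \<Rightarrow> (nat \<Rightarrow> 'n \<Rightarrow> real) \<Rightarrow> (nat \<Rightarrow> 'n \<Rightarrow> real) \<Rightarrow> real" where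
  "lin R w y z = (\<Sum>i\<in>UNIV. inverse (w i) * Aop R y i * (Aop R z i - Aop R y i))"

lemma wnorm_sq: "(\<forall>i. 0 \<le> v i) \<Longrightarrow> (wnorm v z)\<^sup>2 = (\<Sum>i\<in>UNIV. v i * (z i)\<^sup>2)"
  unfolding wnorm_def by (intro real_sqrt_pow2 sum_nonneg) auto

lemma blk_norm_sq: "(\<forall>i. 0 \<le> v i) \<Longrightarrow> (blk_norm R v y)\<^sup>2 = bsq R v y"
  unfolding blk_norm_def bsq_def using wnorm_sq[of v]
  by (simp add: sum_nonneg)

lemma bsq_nonneg: "(\<forall>i. 0 \<le> v i) \<Longrightarrow> 0 \<le> bsq R v y"
  unfolding bsq_def by (intro sum_nonneg) auto

lemma g_w_eq: "(\<forall>i. 0 < w i) \<Longrightarrow> g_w R w y = (1/2) * (\<Sum>i\<in>UNIV. inverse (w i) * (Aop R y i)\<^sup>2)"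
  unfolding g_w_def using wnorm_sq[of "\<lambda>i. inverse (w i)"] by (simp add: less_imp_le)

lemma Aop_lin: "Aop R (\<lambda>r i. a * y r i + b * z r i) i = a * Aop R y i + b * Aop R z i"
  by (simp add: Aop_def sum.distrib sum_distrib_left)

lemma g_expand:
  assumes "\<forall>i. 0 < w i"
  shows "g_w R w z = g_w R w y + lin R w y z + qf R w z y"
proof -
  have "g_w R w z = (1/2) * (\<Sum>i\<in>UNIV. inverse (w i) * (Aop R z i)\<^sup>2)" using g_w_eq[OF assms] .
  also have "\<dots> = (1/2) * (\<Sum>i\<in>UNIV. inverse (w i) * (Aop R y i)\<^sup>2)
      + (\<Sum>i\<in>UNIV. inverse (w i) * Aop R y i * (Aop R z i - Aop R y i))
      + (1/2) * (\<Sum>i\<in>UNIV. inverse (w i) * (Aop R z i - Aop R y i)\<^sup>2)"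
    by (simp add: sum_distrib_left sum.distrib[symmetric] power2_eq_square algebra_simps)
  finally show ?thesis using g_w_eq[OF assms, of R y] by (simp add: lin_def qf_def)
qed

lemma qf_nonneg: "\<forall>i. 0 < w i \<Longrightarrow> 0 \<le> qf R w y z"
  unfolding qf_def by (intro mult_nonneg_nonneg sum_nonneg) (auto simp: less_imp_le)

lemma qf_zero:
  assumes "\<forall>i. 0 < w i" "qf R w y z \<le> 0" shows "Aop R y = Aop R z"
proof
  fix i
  have nn: "\<forall>j\<in>UNIV. 0 \<le> inverse (w j) * (Aop R y j - Aop R z j)\<^sup>2" using assms(1) by (simp add: less_imp_le)
  have "(\<Sum>j\<in>UNIV. inverse (w j) * (Aop R y j - Aop R z j)\<^sup>2) \<le> 0" using assms(2) by (simp add: qf_def)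
  then have "(\<Sum>j\<in>UNIV. inverse (w j) * (Aop R y j - Aop R z j)\<^sup>2) = 0"
    using sum_nonneg[of UNIV "\<lambda>j. inverse (w j) * (Aop R y j - Aop R z j)\<^sup>2"] nn by auto
  then have "\<forall>j\<in>UNIV. inverse (w j) * (Aop R y j - Aop R z j)\<^sup>2 = 0"
    using sum_nonneg_eq_0_iff[of UNIV "\<lambda>j. inverse (w j) * (Aop R y j - Aop R z j)\<^sup>2"] nn by simp
  then have "w i = 0 \<or> Aop R y i = Aop R z i" by simp
  moreover have "w i \<noteq> 0" using assms(1) by (metis less_irrefl)
  ultimately show "Aop R y i = Aop R z i" by simp
qed

lemma prod_base_convex:
  assumes "y \<in> prod_base R F" "z \<in> prod_base R F" "0 \<le> t" "t \<le> 1"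
  shows "(\<lambda>r i. (1 - t) * y r i + t * z r i) \<in> prod_base R F"
  using assms bp_convex[of "y r" "F r" "z r" t for r] unfolding prod_base_def by auto

lemma continuous_g: "\<forall>i. 0 < w i \<Longrightarrow> continuous_on S (g_w R w)"
proof -
  assume w: "\<forall>i. 0 < w i"
  have "continuous_on S (\<lambda>y. (1/2) * (\<Sum>i\<in>UNIV. inverse (w i) * (Aop R y i)\<^sup>2))"
    by (intro continuous_intros continuous_Aop)
  moreover have "g_w R w = (\<lambda>y. (1/2) * (\<Sum>i\<in>UNIV. inverse (w i) * (Aop R y i)\<^sup>2))"
    using g_w_eq[OF w] by (simp add: fun_eq_iff)
  ultimately show ?thesis by simp
qed

lemma Xi_exists:
  assumes w: "\<forall>i. 0 < w i" and ne: "prod_base R F \<noteq> {}"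
  shows "\<exists>x\<in>prod_base R F. \<forall>y\<in>prod_base R F. g_w R w x \<le> g_w R w y"
  using continuous_attains_inf[OF compact_prod_base ne continuous_g[OF w]] .

lemma first_order:
  assumes w: "\<forall>i. 0 < w i" and x: "x \<in> Xi R F w" and y: "y \<in> prod_base R F"
  shows "0 \<le> lin R w x y"
proof (rule ccontr)
  assume "\<not> 0 \<le> lin R w x y"
  then have neg: "lin R w x y < 0" by simp
  define q where "q = qf R w y x"
  have q0: "0 \<le> q" unfolding q_def by (rule qf_nonneg[OF w])
  define t where "t = min 1 (- lin R w x y / (2 * (q + 1)))"
  have "0 < - lin R w x y / (2 * (q + 1))" using neg q0 by (intro divide_pos_pos) auto
  then have t0: "0 < t" "t \<le> 1" by (auto simp: t_def)
  have tq: "t * q \<le> - lin R w x y / 2"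
  proof -
    have "t \<le> - lin R w x y / (2 * (q + 1))" by (simp add: t_def)
    then have "t * q \<le> (- lin R w x y / (2 * (q + 1))) * q" using q0 by (rule mult_right_mono)
    also have "\<dots> \<le> - lin R w x y / 2"
    proof -
      have "(- lin R w x y / (2 * (q + 1))) * q = (- lin R w x y / 2) * (q / (q + 1))" by (simp add: field_simps)
      also have "\<dots> \<le> (- lin R w x y / 2) * 1"
        using neg q0 by (intro mult_left_mono) (auto simp: field_simps)
      finally show ?thesis by simp
    qed
    finally show ?thesis .
  qed
  define xt where "xt = (\<lambda>r i. (1 - t) * x r i + t * y r i)"
  have xB: "x \<in> prod_base R F" using x by (simp add: Xi_def)
  have xtB: "xt \<in> prod_base R F" unfolding xt_def using prod_base_convex[OF xB y] t0 by simp
  have Axt: "Aop R xt i = Aop R x i + t * (Aop R y i - Aop R x i)" for i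
    unfolding xt_def Aop_lin by (simp add: algebra_simps)
  have "lin R w x xt = t * lin R w x y"
    unfolding lin_def Axt by (simp add: sum_distrib_left algebra_simps)
  moreover have "qf R w xt x = t\<^sup>2 * q"
  proof -
    have "\<And>n. (Aop R x n + t * (Aop R y n - Aop R x n) - Aop R x n)\<^sup>2 = t\<^sup>2 * (Aop R y n - Aop R x n)\<^sup>2"
      by (simp add: power_mult_distrib[symmetric])
    then show ?thesis unfolding qf_def q_def Axt by (simp add: sum_distrib_left algebra_simps)
  qed
  ultimately have "g_w R w xt = g_w R w x + t * lin R w x y + t\<^sup>2 * q"
    using g_expand[OF w, of R xt x] by simp
  moreover have "g_w R w x \<le> g_w R w xt" using x xtB by (simp add: Xi_def)
  ultimately have "0 \<le> t * lin R w x y + t * (t * q)" by (simp add: power2_eq_square)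
  then have "0 \<le> t * (lin R w x y + t * q)" by (simp add: algebra_simps)
  then have "0 \<le> lin R w x y + t * q" using t0 by (simp add: zero_le_mult_iff)
  then show False using tq neg by linarith
qed

lemma g_gap:
  assumes w: "\<forall>i. 0 < w i" and x: "x \<in> Xi R F w" and y: "y \<in> prod_base R F"
  shows "qf R w y x \<le> g_w R w y - g_w R w x"
  using g_expand[OF w, of R y x] first_order[OF w x y] by simp

lemma g_dep_Aop: "Aop R y = Aop R z \<Longrightarrow> g_w R w y = g_w R w z"
  by (simp add: g_w_def)

lemma Xi_char:
  assumes w: "\<forall>i. 0 < w i" and x: "x \<in> Xi R F w"
  shows "Xi R F w = {y \<in> prod_base R F. Aop R y = Aop R x}"
proof
  show "Xi R F w \<subseteq> {y \<in> prod_base R F. Aop R y = Aop R x}"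
  proof
    fix y assume y: "y \<in> Xi R F w"
    have yB: "y \<in> prod_base R F" using y by (simp add: Xi_def)
    have xB: "x \<in> prod_base R F" using x by (simp add: Xi_def)
    have "g_w R w y \<le> g_w R w x" using y xB by (simp add: Xi_def)
    then have "qf R w y x \<le> 0" using g_gap[OF w x yB] by simp
    then show "y \<in> {y \<in> prod_base R F. Aop R y = Aop R x}" using qf_zero[OF w] yB by blast
  qed
next
  show "{y \<in> prod_base R F. Aop R y = Aop R x} \<subseteq> Xi R F w"
    using x by (auto simp: Xi_def dest: g_dep_Aop[of R _ x w])
qed

lemma g_star_eq:
  assumes x: "x \<in> Xi R F w"
  shows "g_star R F w = g_w R w x"
  unfolding g_star_def
  using x by (intro cInf_eq_minimum) (auto simp: Xi_def)

definition bdiff :: "(nat \<Rightarrow> 'n \<Rightarrow> real) \<Rightarrow> (nat \<Rightarrow> 'n \<Rightarrow> real) \<Rightarrow> nat \<Rightarrow> 'n \<Rightarrow> real" where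
  "bdiff y z = (\<lambda>r i. y r i - z r i)"

lemma compact_Xi:
  assumes w: "\<forall>i. 0 < w i" and x: "x \<in> Xi R F w"
  shows "compact (Xi R F w)"
proof -
  have "Xi R F w = prod_base R F \<inter> {y. Aop R y = Aop R x}" using Xi_char[OF w x] by auto
  then show ?thesis using compact_Int_closed[OF compact_prod_base closed_Aop_eq] by simp
qed

lemma continuous_bsq_diff: "continuous_on S (\<lambda>z. bsq R v (bdiff y z))"
  unfolding bsq_def bdiff_def by (intro continuous_intros continuous_on_coord2)

lemma nearest_Xi:
  fixes v :: "'n::finite \<Rightarrow> real"
  assumes w: "\<forall>i. 0 < w i" and v: "\<forall>i. 0 \<le> v i" and x: "x \<in> Xi R F w"
  shows "\<exists>x0\<in>Xi R F w. (\<forall>z\<in>Xi R F w. bsq R v (bdiff y x0) \<le> bsq R v (bdiff y z))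
           \<and> (blk_dist R v y (Xi R F w))\<^sup>2 = bsq R v (bdiff y x0)"
proof -
  obtain x0 where x0: "x0 \<in> Xi R F w" and m: "\<forall>z\<in>Xi R F w. bsq R v (bdiff y x0) \<le> bsq R v (bdiff y z)"
    using continuous_attains_inf[OF compact_Xi[OF w x] _ continuous_bsq_diff, of R v y] x by blast
  have bn: "blk_norm R v (\<lambda>r i. y r i - z r i) = sqrt (bsq R v (bdiff y z))" for z
    unfolding blk_norm_def bsq_def bdiff_def using wnorm_sq[OF v] by simp
  have "blk_dist R v y (Xi R F w) = sqrt (bsq R v (bdiff y x0))"
    unfolding blk_dist_def bn
    by (rule cInf_eq_minimum) (use x0 m in \<open>auto intro: real_sqrt_le_mono\<close>)
  then have "(blk_dist R v y (Xi R F w))\<^sup>2 = bsq R v (bdiff y x0)"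
    using bsq_nonneg[OF v] by simp
  then show ?thesis using x0 m by blast
qed

lemma error_bound:
  fixes R :: nat and F :: "nat \<Rightarrow> 'n::finite set \<Rightarrow> real" and w v :: "'n \<Rightarrow> real"
  assumes subm: "\<forall>r<R. submodular (F r) \<and> F r {} = 0"
    and w: "\<forall>i. 0 < w i" and v: "\<forall>i. 0 \<le> v i" and x: "x \<in> Xi R F w" and y: "y \<in> prod_base R F"
  shows "\<exists>z\<in>Xi R F w. bsq R v (bdiff y z) \<le> (\<Sum>i\<in>UNIV. w i) * (\<Sum>i\<in>UNIV. v i) * qf R w y x"
proof -
  have xB: "x \<in> prod_base R F" using x by (simp add: Xi_def)
  obtain z where zB: "z \<in> prod_base R F" and Az: "Aop R z = Aop R x"
    and b: "\<And>i. (\<Sum>r<R. (z r i - y r i)\<^sup>2) \<le> (\<Sum>x'\<in>UNIV. \<bar>Aop R x x' - Aop R y x'\<bar>)\<^sup>2 / 2"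
    using exists_good[OF subm y xB] by blast
  have zX: "z \<in> Xi R F w" using Xi_char[OF w x] zB Az by simp
  define S where "S = (\<Sum>x'\<in>UNIV. \<bar>Aop R x x' - Aop R y x'\<bar>)"
  have "bsq R v (bdiff y z) = (\<Sum>i\<in>UNIV. v i * (\<Sum>r<R. (z r i - y r i)\<^sup>2))"
  proof -
    have e: "\<And>r i. (y r i - z r i)\<^sup>2 = (z r i - y r i)\<^sup>2" by (simp add: power2_eq_square algebra_simps)
    have "bsq R v (bdiff y z) = (\<Sum>r<R. \<Sum>i\<in>UNIV. v i * (z r i - y r i)\<^sup>2)"
      unfolding bsq_def bdiff_def e ..
    also have "\<dots> = (\<Sum>i\<in>UNIV. \<Sum>r<R. v i * (z r i - y r i)\<^sup>2)" by (rule sum.swap)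
    also have "\<dots> = (\<Sum>i\<in>UNIV. v i * (\<Sum>r<R. (z r i - y r i)\<^sup>2))" by (simp add: sum_distrib_left)
    finally show ?thesis .
  qed
  also have "\<dots> \<le> (\<Sum>i\<in>UNIV. v i * (S\<^sup>2 / 2))"
    using b v unfolding S_def by (intro sum_mono mult_left_mono) auto
  also have "\<dots> = (\<Sum>i\<in>UNIV. v i) * (S\<^sup>2 / 2)" by (simp add: sum_distrib_right)
  also have "\<dots> \<le> (\<Sum>i\<in>UNIV. v i) * ((\<Sum>i\<in>UNIV. w i) * (\<Sum>i\<in>UNIV. (Aop R x i - Aop R y i)\<^sup>2 / w i) / 2)"
    using cs_abs[OF w, of "\<lambda>i. Aop R x i - Aop R y i"] v unfolding S_def
    by (intro mult_left_mono divide_right_mono) (auto intro: sum_nonneg)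
  also have "\<dots> = (\<Sum>i\<in>UNIV. w i) * (\<Sum>i\<in>UNIV. v i) * qf R w y x"
  proof -
    have e: "\<And>i. (Aop R x i - Aop R y i)\<^sup>2 / w i = inverse (w i) * (Aop R y i - Aop R x i)\<^sup>2"
      by (simp add: power2_eq_square algebra_simps divide_inverse)
    show ?thesis unfolding qf_def e by simp
  qed
  finally show ?thesis using zX by blast
qed

lemma small_t_nonneg:
  fixes a b :: real
  assumes h: "\<And>t. 0 < t \<Longrightarrow> t \<le> 1 \<Longrightarrow> 0 \<le> t * a + t\<^sup>2 * b"
  shows "0 \<le> a"
proof (rule ccontr)
  assume "\<not> 0 \<le> a"
  then have a: "a < 0" by simp
  define t where "t = min 1 (- a / (2 * (\<bar>b\<bar> + 1)))"
  have p: "0 < - a / (2 * (\<bar>b\<bar> + 1))" using a by (intro divide_pos_pos) auto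
  then have t0: "0 < t" "t \<le> 1" by (auto simp: t_def)
  have "t * \<bar>b\<bar> \<le> (- a / (2 * (\<bar>b\<bar> + 1))) * \<bar>b\<bar>"
    by (intro mult_right_mono) (auto simp: t_def)
  also have "\<dots> = (- a / 2) * (\<bar>b\<bar> / (\<bar>b\<bar> + 1))" by (simp add: field_simps)
  also have "\<dots> \<le> (- a / 2) * 1" using a by (intro mult_left_mono) (auto simp: field_simps)
  finally have tb: "t * \<bar>b\<bar> \<le> - a / 2" by simp
  have "0 \<le> t * a + t\<^sup>2 * b" using h t0 by simp
  also have "t\<^sup>2 * b \<le> t * (t * \<bar>b\<bar>)" using t0 by (simp add: power2_eq_square mult_left_mono)
  finally have "0 \<le> t * (a + t * \<bar>b\<bar>)" by (simp add: algebra_simps)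
  then have "0 \<le> a + t * \<bar>b\<bar>" using t0 by (simp add: zero_le_mult_iff)
  then show False using tb a by linarith
qed

lemma wnorm_le_iff:
  assumes "\<forall>i. 0 \<le> v i"
  shows "wnorm v a \<le> wnorm v b \<longleftrightarrow> (\<Sum>i\<in>UNIV. v i * (a i)\<^sup>2) \<le> (\<Sum>i\<in>UNIV. v i * (b i)\<^sup>2)"
  unfolding wnorm_def by simp

lemma wproj_props:
  fixes G :: "'n::finite set \<Rightarrow> real" and v u :: "'n \<Rightarrow> real"
  assumes ne: "base_polytope G \<noteq> {}" and v: "\<forall>i. 0 < v i"
  shows "wproj (base_polytope G) v u \<in> base_polytope G \<and>
    (\<forall>x\<in>base_polytope G. 0 \<le> (\<Sum>i\<in>UNIV. v i * (wproj (base_polytope G) v u i - u i) * (x i - wproj (base_polytope G) v u i)))"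
proof -
  let ?\<Omega> = "base_polytope G"
  have v0: "\<forall>i. 0 \<le> v i" using v by (simp add: less_imp_le)
  have cont: "continuous_on ?\<Omega> (\<lambda>z. wnorm v (\<lambda>i. z i - u i))"
    unfolding wnorm_def
    by (intro continuous_intros continuous_on_subset[OF continuous_on_product_coordinates]) auto
  have "\<exists>z. z \<in> ?\<Omega> \<and> (\<forall>z'\<in>?\<Omega>. wnorm v (\<lambda>i. z i - u i) \<le> wnorm v (\<lambda>i. z' i - u i))"
    using continuous_attains_inf[OF compact_bp ne cont] by blast
  then have T: "wproj ?\<Omega> v u \<in> ?\<Omega> \<and> (\<forall>z'\<in>?\<Omega>. wnorm v (\<lambda>i. wproj ?\<Omega> v u i - u i) \<le> wnorm v (\<lambda>i. z' i - u i))"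
    unfolding wproj_def by (rule someI_ex)
  define T where "T = wproj ?\<Omega> v u"
  have TO: "T \<in> ?\<Omega>" using T by (simp add: T_def)
  have Tmin: "(\<Sum>i\<in>UNIV. v i * (T i - u i)\<^sup>2) \<le> (\<Sum>i\<in>UNIV. v i * (z i - u i)\<^sup>2)" if "z \<in> ?\<Omega>" for z
    using T that wnorm_le_iff[OF v0] by (simp add: T_def)
  have "0 \<le> (\<Sum>i\<in>UNIV. v i * (T i - u i) * (x i - T i))" if x: "x \<in> ?\<Omega>" for x
  proof -
    let ?a = "2 * (\<Sum>i\<in>UNIV. v i * (T i - u i) * (x i - T i))"
    let ?b = "\<Sum>i\<in>UNIV. v i * (x i - T i)\<^sup>2"
    have "0 \<le> t * ?a + t\<^sup>2 * ?b" if t: "0 < t" "t \<le> 1" for t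
    proof -
      define zt where "zt = (\<lambda>i. (1 - t) * T i + t * x i)"
      have "zt \<in> ?\<Omega>" unfolding zt_def using bp_convex[OF TO x] t by simp
      then have "(\<Sum>i\<in>UNIV. v i * (T i - u i)\<^sup>2) \<le> (\<Sum>i\<in>UNIV. v i * (zt i - u i)\<^sup>2)" by (rule Tmin)
      also have "(\<Sum>i\<in>UNIV. v i * (zt i - u i)\<^sup>2) = (\<Sum>i\<in>UNIV. v i * (T i - u i)\<^sup>2) + (t * ?a + t\<^sup>2 * ?b)"
        unfolding zt_def
        by (simp add: sum.distrib[symmetric] sum_distrib_left power2_eq_square algebra_simps)
      finally show ?thesis by simp
    qed
    then have "0 \<le> ?a" by (rule small_t_nonneg)
    then show ?thesis by simp
  qed
  then show ?thesis using TO by (simp add: T_def)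
qed

lemma three_point:
  fixes v g yr T x :: "'n::finite \<Rightarrow> real"
  assumes v: "\<forall>i. 0 < v i"
    and vi: "0 \<le> (\<Sum>i\<in>UNIV. v i * (T i - (yr i - inverse (v i) * g i)) * (x i - T i))"
  shows "(\<Sum>i\<in>UNIV. g i * (T i - yr i)) + (1/2) * (\<Sum>i\<in>UNIV. v i * (T i - yr i)\<^sup>2)
         + (1/2) * (\<Sum>i\<in>UNIV. v i * (T i - x i)\<^sup>2)
       \<le> (\<Sum>i\<in>UNIV. g i * (x i - yr i)) + (1/2) * (\<Sum>i\<in>UNIV. v i * (x i - yr i)\<^sup>2)"
proof -
  have e: "v i * (T i - (yr i - inverse (v i) * g i)) * (x i - T i)
      = (g i * (x i - yr i) + (1/2) * (v i * (x i - yr i)\<^sup>2))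
        - (g i * (T i - yr i) + (1/2) * (v i * (T i - yr i)\<^sup>2) + (1/2) * (v i * (T i - x i)\<^sup>2))" for i
  proof -
    have "v i \<noteq> 0" using v by (metis less_irrefl)
    then show ?thesis by (simp add: power2_eq_square field_simps)
  qed
  show ?thesis using vi unfolding e
    by (simp add: sum_subtractf sum.distrib sum_distrib_left)
qed

lemma Ks_finite: "finite (Ksubsets R K)"
  unfolding Ksubsets_def by (rule finite_subset[of _ "Pow {..<R}"]) auto

lemma Ks_card: "card (Ksubsets R K) = R choose K"
  unfolding Ksubsets_def using n_subsets[of "{..<R}" K] by simp

lemma Ks_ne: "K \<le> R \<Longrightarrow> Ksubsets R K \<noteq> {}"
  using Ks_card[of R K] by (auto simp: zero_less_binomial_iff)

lemma cnt1_nat: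
  assumes r: "r < R" and K: "1 \<le> K"
  shows "card {C \<in> Ksubsets R K. r \<in> C} = (R - 1) choose (K - 1)"
proof -
  have "card {C \<in> Ksubsets R K. r \<in> C} = card ((\<lambda>C. C - {r}) ` {C \<in> Ksubsets R K. r \<in> C})"
    by (rule card_image[symmetric]) (auto simp: inj_on_def)
  also have "(\<lambda>C. C - {r}) ` {C \<in> Ksubsets R K. r \<in> C} = {D. D \<subseteq> {..<R} - {r} \<and> card D = K - 1}"
  proof
    show "(\<lambda>C. C - {r}) ` {C \<in> Ksubsets R K. r \<in> C} \<subseteq> {D. D \<subseteq> {..<R} - {r} \<and> card D = K - 1}"
    proof
      fix D assume "D \<in> (\<lambda>C. C - {r}) ` {C \<in> Ksubsets R K. r \<in> C}"
      then obtain C where C: "C \<subseteq> {..<R}" "card C = K" "r \<in> C" "D = C - {r}" by (auto simp: Ksubsets_def)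
      have "finite C" using C(1) finite_subset by blast
      then show "D \<in> {D. D \<subseteq> {..<R} - {r} \<and> card D = K - 1}" using C by auto
    qed
  next
    show "{D. D \<subseteq> {..<R} - {r} \<and> card D = K - 1} \<subseteq> (\<lambda>C. C - {r}) ` {C \<in> Ksubsets R K. r \<in> C}"
    proof
      fix D assume D: "D \<in> {D. D \<subseteq> {..<R} - {r} \<and> card D = K - 1}"
      then have fD: "finite D" using finite_subset[of D "{..<R}"] by auto
      have "r \<notin> D" using D by auto
      then have "card (insert r D) = K" using D fD K by simp
      then have "insert r D \<in> {C \<in> Ksubsets R K. r \<in> C}"
        using D r by (auto simp: Ksubsets_def)
      moreover have "D = insert r D - {r}" using D by auto
      ultimately show "D \<in> (\<lambda>C. C - {r}) ` {C \<in> Ksubsets R K. r \<in> C}" by blast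
    qed
  qed
  also have "card {D. D \<subseteq> {..<R} - {r} \<and> card D = K - 1} = (R - 1) choose (K - 1)"
    using n_subsets[of "{..<R} - {r}" "K - 1"] r by simp
  finally show ?thesis .
qed

lemma cnt2_nat:
  assumes r: "r < R" and s: "s < R" and rs: "r \<noteq> s" and K: "2 \<le> K"
  shows "card {C \<in> Ksubsets R K. r \<in> C \<and> s \<in> C} = (R - 2) choose (K - 2)"
proof -
  have "card {C \<in> Ksubsets R K. r \<in> C \<and> s \<in> C} = card ((\<lambda>C. C - {r, s}) ` {C \<in> Ksubsets R K. r \<in> C \<and> s \<in> C})"
    by (rule card_image[symmetric]) (auto simp: inj_on_def)
  also have "(\<lambda>C. C - {r, s}) ` {C \<in> Ksubsets R K. r \<in> C \<and> s \<in> C} = {D. D \<subseteq> {..<R} - {r, s} \<and> card D = K - 2}"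
  proof
    show "(\<lambda>C. C - {r, s}) ` {C \<in> Ksubsets R K. r \<in> C \<and> s \<in> C} \<subseteq> {D. D \<subseteq> {..<R} - {r, s} \<and> card D = K - 2}"
    proof
      fix D assume "D \<in> (\<lambda>C. C - {r, s}) ` {C \<in> Ksubsets R K. r \<in> C \<and> s \<in> C}"
      then obtain C where C: "C \<subseteq> {..<R}" "card C = K" "r \<in> C" "s \<in> C" "D = C - {r, s}" by (auto simp: Ksubsets_def)
      have "finite C" using C(1) finite_subset by blast
      then have "card (C - {r, s}) = K - 2" using C rs by (simp add: card_Diff_subset)
      then show "D \<in> {D. D \<subseteq> {..<R} - {r, s} \<and> card D = K - 2}" using C by auto
    qed
  next
    show "{D. D \<subseteq> {..<R} - {r, s} \<and> card D = K - 2} \<subseteq> (\<lambda>C. C - {r, s}) ` {C \<in> Ksubsets R K. r \<in> C \<and> s \<in> C}"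
    proof
      fix D assume D: "D \<in> {D. D \<subseteq> {..<R} - {r, s} \<and> card D = K - 2}"
      then have fD: "finite D" using finite_subset[of D "{..<R}"] by auto
      have "r \<notin> D" "s \<notin> D" using D by auto
      then have "card (insert r (insert s D)) = K" using D fD rs K by simp
      then have "insert r (insert s D) \<in> {C \<in> Ksubsets R K. r \<in> C \<and> s \<in> C}"
        using D r s by (auto simp: Ksubsets_def)
      moreover have "D = insert r (insert s D) - {r, s}" using D by auto
      ultimately show "D \<in> (\<lambda>C. C - {r, s}) ` {C \<in> Ksubsets R K. r \<in> C \<and> s \<in> C}" by blast
    qed
  qed
  also have "card {D. D \<subseteq> {..<R} - {r, s} \<and> card D = K - 2} = (R - 2) choose (K - 2)"
  proof -
    have "card ({..<R} - {r, s}) = R - 2" using r s rs by (simp add: card_Diff_subset)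
    then show ?thesis using n_subsets[of "{..<R} - {r, s}" "K - 2"] by simp
  qed
  finally show ?thesis .
qed

lemma cnt1:
  assumes r: "r < R" and K: "1 \<le> K" "K \<le> R"
  shows "real (card {C \<in> Ksubsets R K. r \<in> C}) = real K / real R * real (card (Ksubsets R K))"
proof -
  obtain n where n: "R = Suc n" using r by (cases R) auto
  obtain k where k: "K = Suc k" using K by (cases K) auto
  have "Suc n * (n choose k) = (Suc n choose Suc k) * Suc k" by (rule Suc_times_binomial_eq)
  then have "real (Suc n) * real (n choose k) = real (Suc n choose Suc k) * real (Suc k)"
    by (metis of_nat_mult)
  moreover have "real (card {C \<in> Ksubsets R K. r \<in> C}) = real ((R - 1) choose (K - 1))"
    using cnt1_nat[OF r K(1)] by simp
  ultimately show ?thesis unfolding Ks_card n k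
    by (simp add: field_simps del: of_nat_Suc)
qed

lemma cnt2:
  assumes r: "r < R" and s: "s < R" and rs: "r \<noteq> s" and K: "1 \<le> K" "K \<le> R"
  shows "real (card {C \<in> Ksubsets R K. r \<in> C \<and> s \<in> C})
       = real K * (real K - 1) / (real R * (real R - 1)) * real (card (Ksubsets R K))"
proof (cases "K = 1")
  case True
  have E: "{C \<in> Ksubsets R K. r \<in> C \<and> s \<in> C} = {}"
  proof -
    have "\<not> (r \<in> C \<and> s \<in> C)" if "C \<in> Ksubsets R K" for C
    proof
      assume "r \<in> C \<and> s \<in> C"
      then have "{r, s} \<subseteq> C" by auto
      moreover have "finite C" using that finite_subset[of C "{..<R}"] by (auto simp: Ksubsets_def)
      ultimately have "card {r, s} \<le> card C" by (rule card_mono[rotated])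
      then show False using that True rs by (simp add: Ksubsets_def)
    qed
    then show ?thesis by blast
  qed
  show ?thesis unfolding E using True by simp
next
  case False
  then have K2: "2 \<le> K" using K by simp
  obtain n where n: "R = Suc (Suc n)" using r s rs K2 K(2) by (cases R; cases "R - 1") auto
  obtain k where k: "K = Suc (Suc k)" using K2 by (cases K; cases "K - 1") auto
  have e1: "Suc (Suc n) * (Suc n choose Suc k) = (Suc (Suc n) choose Suc (Suc k)) * Suc (Suc k)"
    by (rule Suc_times_binomial_eq)
  have e2: "Suc n * (n choose k) = (Suc n choose Suc k) * Suc k" by (rule Suc_times_binomial_eq)
  define X where "X = n choose k"
  define B where "B = Suc (Suc n) choose Suc (Suc k)"
  define Y where "Y = Suc n choose Suc k"
  have e1': "real (Suc (Suc n)) * real Y = real B * real (Suc (Suc k))"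
    using e1 unfolding Y_def B_def by (metis of_nat_mult)
  have e2': "real (Suc n) * real X = real Y * real (Suc k)"
    using e2 unfolding X_def Y_def by (metis of_nat_mult)
  have key: "real R * (real R - 1) * real X = real K * (real K - 1) * real B"
  proof -
    have "real R * (real R - 1) * real X = real (Suc (Suc n)) * (real (Suc n) * real X)"
      using n by simp
    also have "\<dots> = (real (Suc (Suc n)) * real Y) * real (Suc k)" using e2' by simp
    also have "\<dots> = real B * real (Suc (Suc k)) * real (Suc k)" using e1' by simp
    also have "\<dots> = real K * (real K - 1) * real B" using k by simp
    finally show ?thesis .
  qed
  have c: "real (card {C \<in> Ksubsets R K. r \<in> C \<and> s \<in> C}) = real X"
    using cnt2_nat[OF r s rs K2] n k by (simp add: X_def)
  have cB: "real (card (Ksubsets R K)) = real B" using Ks_card n k by (simp add: B_def)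
  have pos: "real R * (real R - 1) > 0" using n by simp
  have "real X = real K * (real K - 1) * real B / (real R * (real R - 1))"
  proof -
    have "real R * (real R - 1) \<noteq> 0" using pos by (metis less_irrefl)
    then show ?thesis using key by (simp add: eq_divide_eq mult.commute)
  qed
  then show ?thesis unfolding c cB by simp
qed

lemma sum_if_card:
  assumes "finite A"
  shows "(\<Sum>C\<in>A. if P C then (a::real) else 0) = a * real (card {C \<in> A. P C})"
proof -
  have "(\<Sum>C\<in>A. if P C then (a::real) else 0) = sum (\<lambda>_. a) {C \<in> A. P C}"
    using sum.inter_filter[OF assms, of "\<lambda>_. a" P] by simp
  also have "\<dots> = a * real (card {C \<in> A. P C})" by simp
  finally show ?thesis .
qed

lemma E1:
  assumes K: "1 \<le> K" "K \<le> R"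
  shows "(\<Sum>C\<in>Ksubsets R K. \<Sum>r<R. if r \<in> C then a r else 0)
       = real K / real R * real (card (Ksubsets R K)) * (\<Sum>r<R. a r)"
proof -
  have "(\<Sum>C\<in>Ksubsets R K. \<Sum>r<R. if r \<in> C then a r else 0) = (\<Sum>r<R. \<Sum>C\<in>Ksubsets R K. if r \<in> C then a r else 0)"
    by (rule sum.swap)
  also have "\<dots> = (\<Sum>r<R. a r * (real K / real R * real (card (Ksubsets R K))))"
    by (intro sum.cong refl) (simp add: sum_if_card[OF Ks_finite] cnt1[OF _ K])
  also have "\<dots> = real K / real R * real (card (Ksubsets R K)) * (\<Sum>r<R. a r)"
    by (rule trans[OF sum_distrib_right[symmetric] mult.commute])
  finally show ?thesis .
qed

lemma E2:
  assumes K: "1 \<le> K" "K \<le> R"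
  shows "(\<Sum>C\<in>Ksubsets R K. (\<Sum>r<R. if r \<in> C then a r else 0)\<^sup>2)
       = real (card (Ksubsets R K)) * (real K / real R * (\<Sum>r<R. (a r)\<^sup>2)
          + real K * (real K - 1) / (real R * (real R - 1)) * ((\<Sum>r<R. a r)\<^sup>2 - (\<Sum>r<R. (a r)\<^sup>2)))"
proof -
  define N where "N = real (card (Ksubsets R K))"
  define p where "p = real K / real R"
  define p2 where "p2 = real K * (real K - 1) / (real R * (real R - 1))"
  have sq: "(\<Sum>r<R. if r \<in> C then a r else 0)\<^sup>2 = (\<Sum>r<R. \<Sum>s<R. if r \<in> C \<and> s \<in> C then a r * a s else 0)" for C
  proof -
    have "(\<Sum>r<R. if r \<in> C then a r else 0)\<^sup>2 = (\<Sum>r<R. \<Sum>s<R. (if r \<in> C then a r else 0) * (if s \<in> C then a s else 0))"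
      unfolding power2_eq_square by (rule sum_product)
    also have "\<dots> = (\<Sum>r<R. \<Sum>s<R. if r \<in> C \<and> s \<in> C then a r * a s else 0)"
      by (intro sum.cong refl) simp
    finally show ?thesis .
  qed
  have sw: "(\<Sum>C\<in>Ksubsets R K. \<Sum>r<R. \<Sum>s<R. f C r s) = (\<Sum>r<R. \<Sum>s<R. \<Sum>C\<in>Ksubsets R K. f C r s)" for f :: "nat set \<Rightarrow> nat \<Rightarrow> nat \<Rightarrow> real"
  proof -
    have "(\<Sum>C\<in>Ksubsets R K. \<Sum>r<R. \<Sum>s<R. f C r s) = (\<Sum>r<R. \<Sum>C\<in>Ksubsets R K. \<Sum>s<R. f C r s)"
      by (rule sum.swap)
    also have "\<dots> = (\<Sum>r<R. \<Sum>s<R. \<Sum>C\<in>Ksubsets R K. f C r s)"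
      by (intro sum.cong refl) (rule sum.swap)
    finally show ?thesis .
  qed
  have "(\<Sum>C\<in>Ksubsets R K. (\<Sum>r<R. if r \<in> C then a r else 0)\<^sup>2)
      = (\<Sum>r<R. \<Sum>s<R. \<Sum>C\<in>Ksubsets R K. if r \<in> C \<and> s \<in> C then a r * a s else 0)"
    unfolding sq by (rule sw)
  also have "\<dots> = (\<Sum>r<R. \<Sum>s<R. a r * a s * (if r = s then p * N else p2 * N))"
  proof (intro sum.cong refl)
    fix r s assume r: "r \<in> {..<R}" and s: "s \<in> {..<R}"
    show "(\<Sum>C\<in>Ksubsets R K. if r \<in> C \<and> s \<in> C then a r * a s else 0) = a r * a s * (if r = s then p * N else p2 * N)"
    proof (cases "r = s")
      case True
      have "(\<Sum>C\<in>Ksubsets R K. if r \<in> C \<and> s \<in> C then a r * a s else 0) = a r * a s * real (card {C \<in> Ksubsets R K. r \<in> C})"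
        using True sum_if_card[OF Ks_finite, of "\<lambda>C. r \<in> C" "a r * a s" R K] by simp
      then show ?thesis using True r cnt1[of r R K] K by (simp add: p_def N_def)
    next
      case False
      have "(\<Sum>C\<in>Ksubsets R K. if r \<in> C \<and> s \<in> C then a r * a s else 0) = a r * a s * real (card {C \<in> Ksubsets R K. r \<in> C \<and> s \<in> C})"
        using sum_if_card[OF Ks_finite, of "\<lambda>C. r \<in> C \<and> s \<in> C" "a r * a s" R K] by simp
      then show ?thesis using False r s cnt2[of r R s K] K by (simp add: p2_def N_def)
    qed
  qed
  also have "\<dots> = (\<Sum>r<R. \<Sum>s<R. p2 * N * (a r * a s) + (if r = s then (p - p2) * N * (a r * a s) else 0))"
    by (intro sum.cong refl) (simp add: algebra_simps)
  also have "\<dots> = p2 * N * (\<Sum>r<R. \<Sum>s<R. a r * a s) + (p - p2) * N * (\<Sum>r<R. (a r)\<^sup>2)"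
  proof -
    have "(\<Sum>r<R. \<Sum>s<R. p2 * N * (a r * a s) + (if r = s then (p - p2) * N * (a r * a s) else 0))
       = (\<Sum>r<R. p2 * N * (\<Sum>s<R. a r * a s) + (p - p2) * N * (a r)\<^sup>2)"
      by (intro sum.cong refl) (simp add: sum.distrib sum_distrib_left power2_eq_square)
    also have "\<dots> = p2 * N * (\<Sum>r<R. \<Sum>s<R. a r * a s) + (p - p2) * N * (\<Sum>r<R. (a r)\<^sup>2)"
      by (simp add: sum.distrib sum_distrib_left)
    finally show ?thesis .
  qed
  also have "(\<Sum>r<R. \<Sum>s<R. a r * a s) = (\<Sum>r<R. a r)\<^sup>2"
    unfolding power2_eq_square by (rule sum_product[symmetric])
  also have "p2 * N * (\<Sum>r<R. a r)\<^sup>2 + (p - p2) * N * (\<Sum>r<R. (a r)\<^sup>2)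
      = N * (p * (\<Sum>r<R. (a r)\<^sup>2) + p2 * ((\<Sum>r<R. a r)\<^sup>2 - (\<Sum>r<R. (a r)\<^sup>2)))"
    by (simp add: algebra_simps)
  finally show ?thesis unfolding N_def p_def p2_def .
qed

lemma cs_support:
  fixes a :: "nat \<Rightarrow> real"
  assumes T: "T \<subseteq> {..<R}" and z: "\<And>r. r \<notin> T \<Longrightarrow> a r = 0"
  shows "(\<Sum>r<R. a r)\<^sup>2 \<le> real (card T) * (\<Sum>r<R. (a r)\<^sup>2)"
proof -
  have fT: "finite T" using T finite_subset by blast
  have "(\<Sum>r<R. a r) = (\<Sum>r\<in>T. a r)" using T z by (intro sum.mono_neutral_right) auto
  moreover have "(\<Sum>r<R. (a r)\<^sup>2) = (\<Sum>r\<in>T. (a r)\<^sup>2)" using T z by (intro sum.mono_neutral_right) auto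
  moreover have "(\<Sum>r\<in>T. 1 * a r)\<^sup>2 \<le> (\<Sum>r\<in>T. 1\<^sup>2) * (\<Sum>r\<in>T. (a r)\<^sup>2)"
    by (rule Cauchy_Schwarz_ineq_sum)
  ultimately show ?thesis by simp
qed

lemma alg_frac:
  fixes d k m :: real
  assumes "d \<noteq> 0"
  shows "1 + (k - 1) / d * (m - 1) = (k - 1) / d * m + ((d + 1) - k) / d"
proof -
  have "1 + (k - 1) / d * (m - 1) = (d + (k - 1) * (m - 1)) / d" using assms by (simp add: field_simps)
  also have "\<dots> = ((k - 1) * m + ((d + 1) - k)) / d" by (simp add: algebra_simps)
  also have "\<dots> = (k - 1) / d * m + ((d + 1) - k) / d" by (simp add: add_divide_distrib)
  finally show ?thesis .
qed

lemma alg2: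
  fixes p p2 q X m A :: real
  assumes "p2 = p * q" "X = 1 + q * (m - 1)"
  shows "p * A + p2 * ((m - 1) * A) = p * (X * A)"
  unfolding assms by (simp add: algebra_simps)

lemma ESO_coord:
  fixes a :: "nat \<Rightarrow> real"
  assumes K: "1 \<le> K" "K \<le> R" and R2: "2 \<le> R"
    and T: "T \<subseteq> {..<R}" and z: "\<And>r. r \<notin> T \<Longrightarrow> a r = 0"
  shows "(\<Sum>C\<in>Ksubsets R K. (\<Sum>r<R. if r \<in> C then a r else 0)\<^sup>2)
       \<le> real (card (Ksubsets R K)) * (real K / real R) *
          (((real K - 1) / (real R - 1) * real (card T) + (real R - real K) / (real R - 1)) * (\<Sum>r<R. (a r)\<^sup>2))"
proof -
  define N where "N = real (card (Ksubsets R K))"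
  define p2 where "p2 = real K * (real K - 1) / (real R * (real R - 1))"
  define A2 where "A2 = (\<Sum>r<R. (a r)\<^sup>2)"
  have p2: "0 \<le> p2" using K R2 by (simp add: p2_def)
  have N0: "0 \<le> N" by (simp add: N_def)
  have "(\<Sum>r<R. a r)\<^sup>2 - A2 \<le> (real (card T) - 1) * A2"
    using cs_support[OF T z] by (simp add: A2_def algebra_simps)
  then have "p2 * ((\<Sum>r<R. a r)\<^sup>2 - A2) \<le> p2 * ((real (card T) - 1) * A2)"
    using p2 by (rule mult_left_mono)
  then have "N * (real K / real R * A2 + p2 * ((\<Sum>r<R. a r)\<^sup>2 - A2)) \<le> N * (real K / real R * A2 + p2 * ((real (card T) - 1) * A2))"
    using N0 by (intro mult_left_mono) auto
  also have "real K / real R * A2 + p2 * ((real (card T) - 1) * A2)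
      = real K / real R * (((real K - 1) / (real R - 1) * real (card T) + (real R - real K) / (real R - 1)) * A2)"
  proof -
    have r1: "real R - 1 \<noteq> 0" "real R \<noteq> 0" using R2 by auto
    have "p2 = real K / real R * ((real K - 1) / (real R - 1))" unfolding p2_def by simp
    moreover have "1 + (real K - 1) / (real R - 1) * (real (card T) - 1)
        = (real K - 1) / (real R - 1) * real (card T) + (real R - real K) / (real R - 1)"
      using alg_frac[OF r1(1), of "real K" "real (card T)"] by simp
    ultimately show ?thesis
      using alg2[of p2 "real K / real R" "(real K - 1) / (real R - 1)"
          "(real K - 1) / (real R - 1) * real (card T) + (real R - real K) / (real R - 1)" "real (card T)" A2]
      by simp
  qed
  finally show ?thesis using E2[OF K, of a] unfolding N_def p2_def A2_def by (simp add: mult.assoc)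
qed

lemma Aop_step:
  "Aop R (\<lambda>r. if r \<in> C then T r else y r) i = Aop R y i + (\<Sum>r<R. if r \<in> C then T r i - y r i else 0)"
  unfolding Aop_def by (simp add: sum.distrib[symmetric]) (intro sum.cong refl, auto)

lemma exp_g:
  fixes R K :: nat and F :: "nat \<Rightarrow> 'n::finite set \<Rightarrow> real" and w v :: "'n \<Rightarrow> real"
  assumes subm: "\<forall>r<R. submodular (F r) \<and> F r {} = 0"
    and w: "\<forall>i. 0 < w i" and K: "1 \<le> K" "K \<le> R" and R2: "2 \<le> R"
    and yB: "y \<in> prod_base R F" and TB: "\<forall>r<R. T r \<in> base_polytope (F r)"
    and nu: "\<forall>i. inverse (w i) * ((real K - 1) / (real R - 1) * real (mu R F i) + (real R - real K) / (real R - 1)) = v i"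
  shows "(\<Sum>C\<in>Ksubsets R K. g_w R w (\<lambda>r. if r \<in> C then T r else y r))
     \<le> real (card (Ksubsets R K)) * (g_w R w y + real K / real R *
         ((\<Sum>r<R. \<Sum>i\<in>UNIV. grad_r R w y i * (T r i - y r i))
          + (1/2) * (\<Sum>r<R. \<Sum>i\<in>UNIV. v i * (T r i - y r i)\<^sup>2)))"
proof -
  define N where "N = real (card (Ksubsets R K))"
  define p where "p = real K / real R"
  define st where "st C = (\<lambda>r. if r \<in> C then T r else y r)" for C :: "nat set"
  define hh where "hh r i = (if r < R then T r i - y r i else 0)" for r i
  define G where "G r = (\<Sum>i\<in>UNIV. grad_r R w y i * hh r i)" for r
  define c where "c i = (real K - 1) / (real R - 1) * real (mu R F i) + (real R - real K) / (real R - 1)" for i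
  have N0: "0 \<le> N" by (simp add: N_def)
  have p0: "0 \<le> p" by (simp add: p_def)
  have AopC: "Aop R (st C) i = Aop R y i + (\<Sum>r<R. if r \<in> C then hh r i else 0)" for C i
    unfolding st_def Aop_step
    by (rule arg_cong[where f="\<lambda>s. Aop R y i + s"], intro sum.cong refl) (simp add: hh_def)
  have lin_eq: "lin R w y (st C) = (\<Sum>r<R. if r \<in> C then G r else 0)" for C
  proof -
    have "lin R w y (st C) = (\<Sum>i\<in>UNIV. grad_r R w y i * (\<Sum>r<R. if r \<in> C then hh r i else 0))"
      unfolding lin_def AopC grad_r_def by (simp add: mult.assoc)
    also have "\<dots> = (\<Sum>i\<in>UNIV. \<Sum>r<R. if r \<in> C then grad_r R w y i * hh r i else 0)"
      by (simp add: sum_distrib_left if_distrib cong: if_cong)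
    also have "\<dots> = (\<Sum>r<R. \<Sum>i\<in>UNIV. if r \<in> C then grad_r R w y i * hh r i else 0)" by (rule sum.swap)
    also have "\<dots> = (\<Sum>r<R. if r \<in> C then G r else 0)"
      by (intro sum.cong refl) (simp add: G_def)
    finally show ?thesis .
  qed
  have qf_eq: "qf R w (st C) y = (1/2) * (\<Sum>i\<in>UNIV. inverse (w i) * (\<Sum>r<R. if r \<in> C then hh r i else 0)\<^sup>2)" for C
    unfolding qf_def AopC by simp
  have gC: "g_w R w (st C) = g_w R w y + (\<Sum>r<R. if r \<in> C then G r else 0)
      + (1/2) * (\<Sum>i\<in>UNIV. inverse (w i) * (\<Sum>r<R. if r \<in> C then hh r i else 0)\<^sup>2)" for C
    using g_expand[OF w, of R "st C" y] lin_eq qf_eq by simp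
  have s1: "(\<Sum>C\<in>Ksubsets R K. \<Sum>r<R. if r \<in> C then G r else 0) = p * N * (\<Sum>r<R. G r)"
    unfolding p_def N_def by (rule E1[OF K])
  have s2: "(\<Sum>C\<in>Ksubsets R K. (\<Sum>r<R. if r \<in> C then hh r i else 0)\<^sup>2)
      \<le> N * p * (c i * (\<Sum>r<R. (hh r i)\<^sup>2))" for i
  proof -
    define Ti where "Ti = {r. r < R \<and> i \<in> support_set (F r)}"
    have Ti: "Ti \<subseteq> {..<R}" by (auto simp: Ti_def)
    have z: "hh r i = 0" if "r \<notin> Ti" for r
    proof (cases "r < R")
      case True
      then have ns: "i \<notin> support_set (F r)" using that by (simp add: Ti_def)
      have "T r i = 0" using bp_zero_outside[OF _ _ ns] TB subm True by blast
      moreover have "y r i = 0" using bp_zero_outside[OF _ _ ns] yB subm True by (auto simp: prod_base_def)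
      ultimately show ?thesis by (simp add: hh_def)
    qed (simp add: hh_def)
    have "card Ti = mu R F i" by (simp add: Ti_def mu_def)
    then show ?thesis using ESO_coord[OF K R2 Ti, of "\<lambda>r. hh r i"] z
      unfolding N_def p_def c_def by (simp add: mult.assoc)
  qed
  have "(\<Sum>C\<in>Ksubsets R K. g_w R w (st C))
      = N * g_w R w y + (\<Sum>C\<in>Ksubsets R K. \<Sum>r<R. if r \<in> C then G r else 0)
        + (1/2) * (\<Sum>i\<in>UNIV. inverse (w i) * (\<Sum>C\<in>Ksubsets R K. (\<Sum>r<R. if r \<in> C then hh r i else 0)\<^sup>2))"
    unfolding gC by (simp add: sum.distrib sum_distrib_left N_def sum.swap[of _ "Ksubsets R K"])
  also have "\<dots> \<le> N * g_w R w y + p * N * (\<Sum>r<R. G r)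
        + (1/2) * (\<Sum>i\<in>UNIV. inverse (w i) * (N * p * (c i * (\<Sum>r<R. (hh r i)\<^sup>2))))"
    unfolding s1 using s2 w N0 p0 by (intro add_mono mult_left_mono sum_mono) (auto simp: less_imp_le)
  also have "(\<Sum>i\<in>UNIV. inverse (w i) * (N * p * (c i * (\<Sum>r<R. (hh r i)\<^sup>2))))
      = N * p * (\<Sum>r<R. \<Sum>i\<in>UNIV. v i * (hh r i)\<^sup>2)"
  proof -
    have "(\<Sum>i\<in>UNIV. inverse (w i) * (N * p * (c i * (\<Sum>r<R. (hh r i)\<^sup>2))))
        = N * p * (\<Sum>i\<in>UNIV. \<Sum>r<R. v i * (hh r i)\<^sup>2)"
    proof -
      have "inverse (w i) * (N * p * (c i * (\<Sum>r<R. (hh r i)\<^sup>2))) = N * p * (\<Sum>r<R. v i * (hh r i)\<^sup>2)" for i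
      proof -
        have vi: "inverse (w i) * c i = v i" using nu by (simp add: c_def)
        have "inverse (w i) * (N * p * (c i * (\<Sum>r<R. (hh r i)\<^sup>2))) = N * p * ((inverse (w i) * c i) * (\<Sum>r<R. (hh r i)\<^sup>2))"
          by (simp only: ac_simps)
        then show ?thesis unfolding vi by (simp add: sum_distrib_left)
      qed
      then show ?thesis by (simp add: sum_distrib_left)
    qed
    also have "(\<Sum>i\<in>UNIV. \<Sum>r<R. v i * (hh r i)\<^sup>2) = (\<Sum>r<R. \<Sum>i\<in>UNIV. v i * (hh r i)\<^sup>2)"
      by (rule sum.swap)
    finally show ?thesis .
  qed
  finally have main: "(\<Sum>C\<in>Ksubsets R K. g_w R w (st C))
      \<le> N * (g_w R w y + p * ((\<Sum>r<R. G r) + (1/2) * (\<Sum>r<R. \<Sum>i\<in>UNIV. v i * (hh r i)\<^sup>2)))"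
    by (simp add: algebra_simps)
  have e1: "(\<Sum>r<R. G r) = (\<Sum>r<R. \<Sum>i\<in>UNIV. grad_r R w y i * (T r i - y r i))"
    by (intro sum.cong refl) (simp add: G_def hh_def)
  have e2: "(\<Sum>r<R. \<Sum>i\<in>UNIV. v i * (hh r i)\<^sup>2) = (\<Sum>r<R. \<Sum>i\<in>UNIV. v i * (T r i - y r i)\<^sup>2)"
    by (intro sum.cong refl) (simp add: hh_def)
  show ?thesis using main unfolding e1 e2 st_def N_def p_def .
qed

lemma exp_dist:
  fixes R K :: nat and v :: "'n::finite \<Rightarrow> real"
  assumes K: "1 \<le> K" "K \<le> R"
  shows "(\<Sum>C\<in>Ksubsets R K. bsq R v (bdiff (\<lambda>r. if r \<in> C then T r else y r) x))
     = real (card (Ksubsets R K)) * (bsq R v (bdiff y x) + real K / real R *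
         (\<Sum>r<R. (\<Sum>i\<in>UNIV. v i * (T r i - x r i)\<^sup>2) - (\<Sum>i\<in>UNIV. v i * (y r i - x r i)\<^sup>2)))"
proof -
  define Q0 where "Q0 r = (\<Sum>i\<in>UNIV. v i * (y r i - x r i)\<^sup>2)" for r
  define D where "D r = (\<Sum>i\<in>UNIV. v i * (T r i - x r i)\<^sup>2) - Q0 r" for r
  have b: "bsq R v (bdiff (\<lambda>r. if r \<in> C then T r else y r) x) = (\<Sum>r<R. Q0 r) + (\<Sum>r<R. if r \<in> C then D r else 0)" for C
    unfolding bsq_def bdiff_def by (simp add: sum.distrib[symmetric]) (intro sum.cong refl, simp add: D_def Q0_def)
  have "(\<Sum>C\<in>Ksubsets R K. bsq R v (bdiff (\<lambda>r. if r \<in> C then T r else y r) x))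
      = real (card (Ksubsets R K)) * (\<Sum>r<R. Q0 r) + (\<Sum>C\<in>Ksubsets R K. \<Sum>r<R. if r \<in> C then D r else 0)"
    unfolding b by (simp add: sum.distrib)
  also have "\<dots> = real (card (Ksubsets R K)) * (\<Sum>r<R. Q0 r) + real K / real R * real (card (Ksubsets R K)) * (\<Sum>r<R. D r)"
    by (simp add: E1[OF K])
  also have "(\<Sum>r<R. Q0 r) = bsq R v (bdiff y x)" by (simp add: bsq_def bdiff_def Q0_def)
  finally show ?thesis by (simp add: D_def Q0_def algebra_simps)
qed

lemma fin_alg:
  fixes e q D L p :: real
  assumes q0: "0 \<le> q" and qe: "q \<le> e" and D0: "0 \<le> D" and DL: "2 * D \<le> L * q" and L2: "2 \<le> L"
    and p0: "0 \<le> p"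
  shows "e + D + p * (- e - q) \<le> (1 - p * (4 / (L + 2))) * (e + D)"
proof -
  define b where "b = 4 / (L + 2)"
  have Lp: "0 < L + 2" using L2 by simp
  have b1: "b \<le> 1" using L2 by (simp add: b_def divide_le_eq)
  have b0: "0 \<le> b" using Lp by (simp add: b_def)
  have "b * D \<le> (2 - b) * q"
  proof -
    have "b * D = 4 * D / (L + 2)" by (simp add: b_def)
    also have "\<dots> \<le> 2 * L * q / (L + 2)" using DL Lp by (intro divide_right_mono) auto
    also have "2 * L * q / (L + 2) = (2 - b) * q" using Lp by (simp add: b_def field_simps)
    finally show ?thesis .
  qed
  moreover have "(1 - b) * q \<le> (1 - b) * e" using b1 qe by (intro mult_left_mono) auto
  ultimately have "b * (e + D) \<le> e + q" by (simp add: algebra_simps)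
  then have "p * (b * (e + D)) \<le> p * (e + q)" using p0 by (rule mult_left_mono)
  then show ?thesis unfolding b_def[symmetric] by (simp add: algebra_simps)
qed

lemma qf_sym: "qf R w y z = qf R w z y"
  unfolding qf_def by (simp add: power2_commute)

lemma qf_Aop: "Aop R z = Aop R z' \<Longrightarrow> qf R w y z = qf R w y z'"
  unfolding qf_def by simp

lemma one_step:
  fixes R K :: nat and F :: "nat \<Rightarrow> 'n::finite set \<Rightarrow> real" and w v :: "'n \<Rightarrow> real"
  assumes subm: "\<forall>r<R. submodular (F r) \<and> F r {} = 0"
    and w: "\<forall>i. 0 < w i" and K: "1 \<le> K" "K \<le> R" and R2: "2 \<le> R"
    and yB: "y \<in> prod_base R F"
    and nu: "\<forall>i. inverse (w i) * ((real K - 1) / (real R - 1) * real (mu R F i) + (real R - real K) / (real R - 1)) = v i"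
    and vpos: "\<forall>i. 0 < v i"
    and L2: "2 \<le> (\<Sum>i\<in>UNIV. w i) * (\<Sum>i\<in>UNIV. v i)"
  shows "(\<Sum>C\<in>Ksubsets R K. g_w R w (alg_step R F w v C y) - g_star R F w
             + (1/2) * (blk_dist R v (alg_step R F w v C y) (Xi R F w))\<^sup>2)
     \<le> real (card (Ksubsets R K)) * ((1 - real K / real R * (4 / ((\<Sum>i\<in>UNIV. w i) * (\<Sum>i\<in>UNIV. v i) + 2)))
          * (g_w R w y - g_star R F w + (1/2) * (blk_dist R v y (Xi R F w))\<^sup>2))"
    and "\<forall>C\<in>Ksubsets R K. alg_step R F w v C y \<in> prod_base R F"
proof -
  define L where "L = (\<Sum>i\<in>UNIV. w i) * (\<Sum>i\<in>UNIV. v i)"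
  define N where "N = real (card (Ksubsets R K))"
  define p where "p = real K / real R"
  define grad where "grad = grad_r R w y"
  define T where "T r = wproj (base_polytope (F r)) v (\<lambda>i. y r i - inverse (v i) * grad i)" for r
  define st where "st C = (\<lambda>r. if r \<in> C then T r else y r)" for C :: "nat set"
  have v0: "\<forall>i. 0 \<le> v i" using vpos by (simp add: less_imp_le)
  have N0: "0 \<le> N" by (simp add: N_def)
  have p0: "0 \<le> p" by (simp add: p_def)
  have yr: "y r \<in> base_polytope (F r)" if "r < R" for r using yB that by (simp add: prod_base_def)
  have TP: "T r \<in> base_polytope (F r) \<and> (\<forall>x\<in>base_polytope (F r). 0 \<le> (\<Sum>i\<in>UNIV. v i * (T r i - (y r i - inverse (v i) * grad i)) * (x i - T r i)))"
    if "r < R" for r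
    unfolding T_def using wproj_props[OF _ vpos] yr[OF that] by blast
  have TB: "\<forall>r<R. T r \<in> base_polytope (F r)" using TP by blast
  have st_eq: "alg_step R F w v C y = st C" for C
    unfolding alg_step_def st_def T_def grad_def by simp
  have stB: "st C \<in> prod_base R F" if "C \<in> Ksubsets R K" for C
  proof -
    have "C \<subseteq> {..<R}" using that by (simp add: Ksubsets_def)
    then show ?thesis using yB TB unfolding st_def prod_base_def by auto
  qed
  show "\<forall>C\<in>Ksubsets R K. alg_step R F w v C y \<in> prod_base R F" using stB st_eq by simp
  obtain xs where xsB: "xs \<in> prod_base R F" and xsmin: "\<forall>z\<in>prod_base R F. g_w R w xs \<le> g_w R w z"
    using Xi_exists[OF w] yB by blast
  have xsX: "xs \<in> Xi R F w" using xsB xsmin by (simp add: Xi_def)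
  have gs: "g_star R F w = g_w R w xs" by (rule g_star_eq[OF xsX])
  obtain x0 where x0X: "x0 \<in> Xi R F w" and x0min: "\<forall>z\<in>Xi R F w. bsq R v (bdiff y x0) \<le> bsq R v (bdiff y z)"
    and dy: "(blk_dist R v y (Xi R F w))\<^sup>2 = bsq R v (bdiff y x0)"
    using nearest_Xi[OF w v0 xsX, of y] by blast
  have x0B: "x0 r \<in> base_polytope (F r)" if "r < R" for r using x0X that by (simp add: Xi_def prod_base_def)
  have gx0: "g_w R w x0 = g_star R F w" using g_star_eq[OF x0X] by simp
  have dst: "(blk_dist R v (st C) (Xi R F w))\<^sup>2 \<le> bsq R v (bdiff (st C) x0)" for C
  proof -
    obtain x1 where "x1 \<in> Xi R F w" "\<forall>z\<in>Xi R F w. bsq R v (bdiff (st C) x1) \<le> bsq R v (bdiff (st C) z)"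
      "(blk_dist R v (st C) (Xi R F w))\<^sup>2 = bsq R v (bdiff (st C) x1)"
      using nearest_Xi[OF w v0 xsX, of "st C"] by blast
    then show ?thesis using x0X by simp
  qed
  define G where "G = (\<Sum>r<R. \<Sum>i\<in>UNIV. grad i * (T r i - y r i))"
  define H where "H = (\<Sum>r<R. \<Sum>i\<in>UNIV. v i * (T r i - y r i)\<^sup>2)"
  define Dl where "Dl = (\<Sum>r<R. (\<Sum>i\<in>UNIV. v i * (T r i - x0 r i)\<^sup>2) - (\<Sum>i\<in>UNIV. v i * (y r i - x0 r i)\<^sup>2))"
  have Eg: "(\<Sum>C\<in>Ksubsets R K. g_w R w (st C)) \<le> N * (g_w R w y + p * (G + (1/2) * H))"
    using exp_g[OF subm w K R2 yB TB nu] unfolding st_def N_def p_def G_def H_def grad_def .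
  have Ed: "(\<Sum>C\<in>Ksubsets R K. bsq R v (bdiff (st C) x0)) = N * (bsq R v (bdiff y x0) + p * Dl)"
    using exp_dist[OF K, of v T y x0] unfolding st_def N_def p_def Dl_def .
  have tp: "G + (1/2) * H + (1/2) * Dl \<le> lin R w y x0"
  proof -
    have blk: "(\<Sum>i\<in>UNIV. grad i * (T r i - y r i)) + (1/2) * (\<Sum>i\<in>UNIV. v i * (T r i - y r i)\<^sup>2)
        + (1/2) * ((\<Sum>i\<in>UNIV. v i * (T r i - x0 r i)\<^sup>2) - (\<Sum>i\<in>UNIV. v i * (y r i - x0 r i)\<^sup>2))
        \<le> (\<Sum>i\<in>UNIV. grad i * (x0 r i - y r i))" if r: "r < R" for r
    proof -
      have vi: "0 \<le> (\<Sum>i\<in>UNIV. v i * (T r i - (y r i - inverse (v i) * grad i)) * (x0 r i - T r i))"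
        using TP[OF r] x0B[OF r] by blast
      have e: "(\<Sum>i\<in>UNIV. v i * (x0 r i - y r i)\<^sup>2) = (\<Sum>i\<in>UNIV. v i * (y r i - x0 r i)\<^sup>2)"
        by (intro sum.cong refl) (simp add: power2_eq_square algebra_simps)
      show ?thesis using three_point[OF vpos vi] e by (simp add: algebra_simps)
    qed
    have "G + (1/2) * H + (1/2) * Dl = (\<Sum>r<R. (\<Sum>i\<in>UNIV. grad i * (T r i - y r i)) + (1/2) * (\<Sum>i\<in>UNIV. v i * (T r i - y r i)\<^sup>2)
        + (1/2) * ((\<Sum>i\<in>UNIV. v i * (T r i - x0 r i)\<^sup>2) - (\<Sum>i\<in>UNIV. v i * (y r i - x0 r i)\<^sup>2)))"
      unfolding G_def H_def Dl_def by (simp add: sum.distrib sum_distrib_left)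
    also have "\<dots> \<le> (\<Sum>r<R. \<Sum>i\<in>UNIV. grad i * (x0 r i - y r i))"
      by (intro sum_mono) (use blk in auto)
    also have "\<dots> = (\<Sum>i\<in>UNIV. \<Sum>r<R. grad i * (x0 r i - y r i))" by (rule sum.swap)
    also have "\<dots> = lin R w y x0"
      unfolding lin_def
    proof (intro sum.cong refl)
      fix i :: 'n
      have "(\<Sum>r<R. x0 r i - y r i) = Aop R x0 i - Aop R y i" by (simp add: Aop_def sum_subtractf)
      then have "(\<Sum>r<R. grad i * (x0 r i - y r i)) = grad i * (Aop R x0 i - Aop R y i)"
        by (simp add: sum_distrib_left[symmetric])
      then show "(\<Sum>r<R. grad i * (x0 r i - y r i)) = inverse (w i) * Aop R y i * (Aop R x0 i - Aop R y i)"
        by (simp add: grad_def grad_r_def)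
    qed
    finally show ?thesis .
  qed
  have lin_eq: "lin R w y x0 = g_star R F w - g_w R w y - qf R w y x0"
    using g_expand[OF w, of R x0 y] gx0 qf_sym[of R w x0 y] by simp
  define e where "e = g_w R w y - g_star R F w"
  define q where "q = qf R w y x0"
  define D where "D = (1/2) * bsq R v (bdiff y x0)"
  have q0: "0 \<le> q" unfolding q_def by (rule qf_nonneg[OF w])
  have qe: "q \<le> e" unfolding q_def e_def using g_gap[OF w x0X yB] gx0 by simp
  have D0: "0 \<le> D" unfolding D_def using bsq_nonneg[OF v0] by simp
  have DL: "2 * D \<le> L * q"
  proof -
    obtain z where zX: "z \<in> Xi R F w" and zb: "bsq R v (bdiff y z) \<le> (\<Sum>i\<in>UNIV. w i) * (\<Sum>i\<in>UNIV. v i) * qf R w y xs"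
      using error_bound[OF subm w v0 xsX yB] by blast
    have "Aop R x0 = Aop R xs" using Xi_char[OF w xsX] x0X by simp
    then have "qf R w y xs = q" unfolding q_def using qf_Aop[of R x0 xs w y] by simp
    moreover have "bsq R v (bdiff y x0) \<le> bsq R v (bdiff y z)" using x0min zX by blast
    ultimately show ?thesis using zb unfolding D_def L_def by simp
  qed
  have "(\<Sum>C\<in>Ksubsets R K. g_w R w (st C) - g_star R F w + (1/2) * (blk_dist R v (st C) (Xi R F w))\<^sup>2)
      = (\<Sum>C\<in>Ksubsets R K. g_w R w (st C)) - N * g_star R F w + (1/2) * (\<Sum>C\<in>Ksubsets R K. (blk_dist R v (st C) (Xi R F w))\<^sup>2)"
    by (simp add: sum.distrib sum_subtractf sum_distrib_left N_def)
  also have "\<dots> \<le> N * (g_w R w y + p * (G + (1/2) * H)) - N * g_star R F w + (1/2) * (N * (bsq R v (bdiff y x0) + p * Dl))"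
  proof -
    have "(\<Sum>C\<in>Ksubsets R K. (blk_dist R v (st C) (Xi R F w))\<^sup>2) \<le> (\<Sum>C\<in>Ksubsets R K. bsq R v (bdiff (st C) x0))"
      using dst by (rule sum_mono)
    then show ?thesis using Eg Ed by linarith
  qed
  also have "\<dots> = N * (e + D + p * (G + (1/2) * H + (1/2) * Dl))"
    unfolding e_def D_def by (simp add: algebra_simps)
  also have "\<dots> \<le> N * (e + D + p * (- e - q))"
    using tp lin_eq N0 p0 unfolding e_def q_def by (intro mult_left_mono add_left_mono) (auto intro: mult_left_mono)
  also have "\<dots> \<le> N * ((1 - p * (4 / (L + 2))) * (e + D))"
    using fin_alg[OF q0 qe D0 DL _ p0] L2 N0 unfolding L_def by (intro mult_left_mono) auto
  finally show "(\<Sum>C\<in>Ksubsets R K. g_w R w (alg_step R F w v C y) - g_star R F w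
             + (1/2) * (blk_dist R v (alg_step R F w v C y) (Xi R F w))\<^sup>2)
     \<le> real (card (Ksubsets R K)) * ((1 - real K / real R * (4 / ((\<Sum>i\<in>UNIV. w i) * (\<Sum>i\<in>UNIV. v i) + 2)))
          * (g_w R w y - g_star R F w + (1/2) * (blk_dist R v y (Xi R F w))\<^sup>2))"
    unfolding st_eq N_def[symmetric] p_def[symmetric] L_def[symmetric] e_def[symmetric] dy D_def[symmetric] by simp
qed

lemma draw_0: "draw_seqs R K 0 = {[]}"
  by (auto simp: draw_seqs_def)

lemma draw_Suc: "draw_seqs R K (Suc k) = (\<lambda>(C, Cs). C # Cs) ` (Ksubsets R K \<times> draw_seqs R K k)"
proof
  show "draw_seqs R K (Suc k) \<subseteq> (\<lambda>(C, Cs). C # Cs) ` (Ksubsets R K \<times> draw_seqs R K k)"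
  proof
    fix xs assume "xs \<in> draw_seqs R K (Suc k)"
    then obtain C Cs where "xs = C # Cs" "length Cs = k" "C \<in> Ksubsets R K" "set Cs \<subseteq> Ksubsets R K"
      by (cases xs) (auto simp: draw_seqs_def)
    then show "xs \<in> (\<lambda>(C, Cs). C # Cs) ` (Ksubsets R K \<times> draw_seqs R K k)"
      by (force simp: draw_seqs_def)
  qed
qed (auto simp: draw_seqs_def)

lemma draw_finite: "finite (draw_seqs R K k)"
  by (induction k) (simp_all add: draw_0 draw_Suc Ks_finite)

lemma draw_card: "card (draw_seqs R K k) = card (Ksubsets R K) ^ k"
proof (induction k)
  case 0 then show ?case by (simp add: draw_0)
next
  case (Suc k)
  have "inj_on (\<lambda>(C, Cs). C # Cs) (Ksubsets R K \<times> draw_seqs R K k)" by (auto simp: inj_on_def)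
  then have "card (draw_seqs R K (Suc k)) = card (Ksubsets R K \<times> draw_seqs R K k)"
    unfolding draw_Suc by (rule card_image)
  then show ?case using Suc by (simp add: card_cartesian_product)
qed

lemma draw_sum:
  "(\<Sum>Cs\<in>draw_seqs R K (Suc k). f Cs) = (\<Sum>C\<in>Ksubsets R K. \<Sum>Cs\<in>draw_seqs R K k. f (C # Cs))"
proof -
  have "inj_on (\<lambda>(C, Cs). C # Cs) (Ksubsets R K \<times> draw_seqs R K k)" by (auto simp: inj_on_def)
  then have "(\<Sum>Cs\<in>draw_seqs R K (Suc k). f Cs) = (\<Sum>p\<in>Ksubsets R K \<times> draw_seqs R K k. f (fst p # snd p))"
    unfolding draw_Suc by (subst sum.reindex) (auto simp: case_prod_beta)
  also have "\<dots> = (\<Sum>C\<in>Ksubsets R K. \<Sum>Cs\<in>draw_seqs R K k. f (C # Cs))"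
    by (simp add: sum.cartesian_product case_prod_unfold)
  finally show ?thesis .
qed

lemma alg_iter_Cons: "alg_iter R F w v y (C # Cs) = alg_iter R F w v (alg_step R F w v C y) Cs"
  by (simp add: alg_iter_def)

lemma alg_iter_Nil: "alg_iter R F w v y [] = y"
  by (simp add: alg_iter_def)

lemma iterate_bound:
  fixes \<Phi> :: "(nat \<Rightarrow> 'n::finite \<Rightarrow> real) \<Rightarrow> real" and B :: "(nat \<Rightarrow> 'n \<Rightarrow> real) set"
  assumes step: "\<And>y. y \<in> B \<Longrightarrow> (\<Sum>C\<in>Ksubsets R K. \<Phi> (alg_step R F w v C y)) \<le> real (card (Ksubsets R K)) * (\<rho> * \<Phi> y)"
    and stepB: "\<And>y C. y \<in> B \<Longrightarrow> C \<in> Ksubsets R K \<Longrightarrow> alg_step R F w v C y \<in> B"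
    and rho: "0 \<le> \<rho>"
    and yB: "y \<in> B"
  shows "(\<Sum>Cs\<in>draw_seqs R K k. \<Phi> (alg_iter R F w v y Cs)) \<le> real (card (Ksubsets R K)) ^ k * (\<rho> ^ k * \<Phi> y)"
  using yB
proof (induction k arbitrary: y)
  case 0 then show ?case by (simp add: draw_0 alg_iter_Nil)
next
  case (Suc k)
  define N where "N = real (card (Ksubsets R K))"
  have N0: "0 \<le> N" by (simp add: N_def)
  have "(\<Sum>Cs\<in>draw_seqs R K (Suc k). \<Phi> (alg_iter R F w v y Cs))
      = (\<Sum>C\<in>Ksubsets R K. \<Sum>Cs\<in>draw_seqs R K k. \<Phi> (alg_iter R F w v (alg_step R F w v C y) Cs))"
    by (simp add: draw_sum alg_iter_Cons)
  also have "\<dots> \<le> (\<Sum>C\<in>Ksubsets R K. N ^ k * (\<rho> ^ k * \<Phi> (alg_step R F w v C y)))"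
    by (intro sum_mono) (use Suc.IH stepB Suc.prems in \<open>auto simp: N_def\<close>)
  also have "\<dots> = N ^ k * \<rho> ^ k * (\<Sum>C\<in>Ksubsets R K. \<Phi> (alg_step R F w v C y))"
    by (simp add: sum_distrib_left mult.assoc)
  also have "\<dots> \<le> N ^ k * \<rho> ^ k * (N * (\<rho> * \<Phi> y))"
    using step[OF Suc.prems] N0 rho unfolding N_def by (intro mult_left_mono) auto
  also have "\<dots> = N ^ Suc k * (\<rho> ^ Suc k * \<Phi> y)" by (simp add: algebra_simps)
  finally show ?case unfolding N_def .
qed

lemma step_in_B:
  fixes F :: "nat \<Rightarrow> 'n::finite set \<Rightarrow> real"
  assumes yB: "y \<in> prod_base R F" and C: "C \<in> Ksubsets R K" and vpos: "\<forall>i. 0 < v i"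
  shows "alg_step R F w v C y \<in> prod_base R F"
proof -
  have Csub: "C \<subseteq> {..<R}" using C by (simp add: Ksubsets_def)
  have "wproj (base_polytope (F r)) v (\<lambda>i. y r i - inverse (v i) * grad_r R w y i) \<in> base_polytope (F r)"
    if "r < R" for r
  proof -
    have "y r \<in> base_polytope (F r)" using yB that by (simp add: prod_base_def)
    then show ?thesis using wproj_props[OF _ vpos] by blast
  qed
  then show ?thesis using yB Csub unfolding alg_step_def prod_base_def by auto
qed

lemma iter_in_B:
  fixes F :: "nat \<Rightarrow> 'n::finite set \<Rightarrow> real"
  assumes "y \<in> prod_base R F" "set Cs \<subseteq> Ksubsets R K" "\<forall>i. 0 < v i"
  shows "alg_iter R F w v y Cs \<in> prod_base R F"
  using assms
proof (induction Cs arbitrary: y)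
  case Nil then show ?case by (simp add: alg_iter_Nil)
next
  case (Cons C Cs)
  then show ?case using step_in_B[of y R F C K v w] by (simp add: alg_iter_Cons)
qed

lemma card1_unique:
  fixes F :: "nat \<Rightarrow> 'n::finite set \<Rightarrow> real"
  assumes c: "\<not> 2 \<le> CARD('n)" and y: "y \<in> prod_base R F" and z: "z \<in> prod_base R F"
  shows "y = z"
proof -
  have "0 < CARD('n)" by (rule finite_UNIV_card_ge_0) simp
  then have "CARD('n) = 1" using c by linarith
  then obtain a :: 'n where a: "UNIV = {a}" using card_1_singletonE by blast
  have "y r = z r" for r
  proof (cases "r < R")
    case True
    have "y r \<in> base_polytope (F r)" "z r \<in> base_polytope (F r)" using y z True by (auto simp: prod_base_def)
    then have "sum (y r) UNIV = F r UNIV" "sum (z r) UNIV = F r UNIV" by (simp_all add: bp_sum)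
    moreover have "sum (y r) UNIV = y r a" "sum (z r) UNIV = z r a" unfolding a by simp_all
    ultimately have "y r a = z r a" by simp
    then show ?thesis using a by (auto simp: fun_eq_iff)
  next
    case False then show ?thesis using y z by (auto simp: prod_base_def)
  qed
  then show ?thesis by auto
qed

lemma Phi_zero_card1:
  fixes F :: "nat \<Rightarrow> 'n::finite set \<Rightarrow> real"
  assumes c: "\<not> 2 \<le> CARD('n)" and w: "\<forall>i. 0 < w i" and y: "y \<in> prod_base R F"
  shows "g_w R w y - g_star R F w + (1/2) * (blk_dist R v y (Xi R F w))\<^sup>2 = 0"
proof -
  obtain xs where xsB: "xs \<in> prod_base R F" and xsmin: "\<forall>z\<in>prod_base R F. g_w R w xs \<le> g_w R w z"
    using Xi_exists[OF w] y by blast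
  have "xs = y" using card1_unique[OF c xsB y] .
  then have yX: "y \<in> Xi R F w" using xsB xsmin by (simp add: Xi_def)
  have X1: "Xi R F w = {y}"
  proof
    show "Xi R F w \<subseteq> {y}"
    proof
      fix z assume "z \<in> Xi R F w"
      then have "z \<in> prod_base R F" by (simp add: Xi_def)
      then show "z \<in> {y}" using card1_unique[OF c _ y] by simp
    qed
  qed (use yX in simp)
  have "blk_dist R v y (Xi R F w) = 0" unfolding X1 blk_dist_def by (simp add: blk_norm_def wnorm_def)
  moreover have "g_star R F w = g_w R w y" by (rule g_star_eq[OF yX])
  ultimately show ?thesis by simp
qed

lemma L_ge2:
  fixes w v :: "'n::finite \<Rightarrow> real"
  assumes c: "2 \<le> CARD('n)" and w: "\<forall>i. 0 < w i" and v: "\<forall>i. inverse (w i) \<le> v i"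
  shows "2 \<le> (\<Sum>i\<in>UNIV. w i) * (\<Sum>i\<in>UNIV. v i)"
proof -
  obtain a b :: 'n where ab: "a \<noteq> b"
  proof -
    have "\<not> (\<forall>a b :: 'n. a = b)"
    proof
      assume "\<forall>a b :: 'n. a = b"
      then have "UNIV \<subseteq> {undefined :: 'n}" by auto
      then have "CARD('n) \<le> 1" using card_mono[of "{undefined :: 'n}" UNIV] by simp
      with c show False by simp
    qed
    then show ?thesis using that by blast
  qed
  have wa: "0 < w a" "0 < w b" using w by auto
  have s1: "w a + w b \<le> (\<Sum>i\<in>UNIV. w i)"
  proof -
    have "(\<Sum>i\<in>{a, b}. w i) \<le> (\<Sum>i\<in>UNIV. w i)" using w by (intro sum_mono2) (auto simp: less_imp_le)
    then show ?thesis using ab by simp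
  qed
  have s2: "inverse (w a) + inverse (w b) \<le> (\<Sum>i\<in>UNIV. v i)"
  proof -
    have "(\<Sum>i\<in>{a, b}. inverse (w i)) \<le> (\<Sum>i\<in>{a, b}. v i)" using v by (intro sum_mono) auto
    also have "\<dots> \<le> (\<Sum>i\<in>UNIV. v i)" using w v
      by (intro sum_mono2) (auto intro: order_trans[OF less_imp_le[OF positive_imp_inverse_positive]])
    finally show ?thesis using ab by simp
  qed
  have "2 \<le> (w a + w b) * (inverse (w a) + inverse (w b))"
  proof -
    have "(w a + w b) * (inverse (w a) + inverse (w b)) = 2 + w a / w b + w b / w a"
      using wa by (simp add: field_simps)
    moreover have "0 \<le> w a / w b" "0 \<le> w b / w a" using wa by auto
    ultimately show ?thesis by linarith
  qed
  also have "\<dots> \<le> (\<Sum>i\<in>UNIV. w i) * (\<Sum>i\<in>UNIV. v i)"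
    using s1 s2 wa by (intro mult_mono) (auto intro: add_pos_pos)
  finally show ?thesis .
qed

theorem mainTheorem17:
  fixes R K :: nat and F :: "nat \<Rightarrow> 'n::finite set \<Rightarrow> real"
    and w :: "'n \<Rightarrow> real" and y0 :: "nat \<Rightarrow> 'n \<Rightarrow> real" and k :: nat
  assumes subm: "\<forall>r<R. submodular (F r) \<and> F r {} = 0"
    and wpos: "\<forall>i. w i > 0"
    and R2: "R \<ge> 2" and K1: "1 \<le> K" and KR: "K \<le> R"
    and mu1: "\<forall>i. mu R F i \<ge> 1"
    and y0B: "y0 \<in> prod_base R F"
  shows "let \<nu> = (\<lambda>i. inverse (w i) * ((real K - 1) / (real R - 1) * real (mu R F i)
                                    + (real R - real K) / (real R - 1)));
             \<Phi> = (\<lambda>y. g_w R w y - g_star R F w + (1/2) * (blk_dist R \<nu> y (Xi R F w))\<^sup>2)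
         in measure_pmf.expectation (pmf_of_set (draw_seqs R K k))
              (\<lambda>Cs. \<Phi> (alg_iter R F w \<nu> y0 Cs))
            \<le> (1 - 4 * real K / (real R * ((\<Sum>i\<in>UNIV. \<bar>w i\<bar>) * (\<Sum>i\<in>UNIV. \<bar>\<nu> i\<bar>) + 2))) ^ k
              * \<Phi> y0"
proof -
  define \<nu> where "\<nu> = (\<lambda>i. inverse (w i) * ((real K - 1) / (real R - 1) * real (mu R F i)
                                    + (real R - real K) / (real R - 1)))"
  define \<Phi> where "\<Phi> = (\<lambda>y. g_w R w y - g_star R F w + (1/2) * (blk_dist R \<nu> y (Xi R F w))\<^sup>2)"
  define L where "L = (\<Sum>i\<in>UNIV. w i) * (\<Sum>i\<in>UNIV. \<nu> i)"
  define N where "N = real (card (Ksubsets R K))"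
  define \<rho> where "\<rho> = 1 - real K / real R * (4 / (L + 2))"
  have R1: "1 < real R" using R2 by simp
  have c1: "1 \<le> (real K - 1) / (real R - 1) * real (mu R F i) + (real R - real K) / (real R - 1)" for i
  proof -
    have a: "0 \<le> (real K - 1) / (real R - 1)" using K1 R1 by simp
    have "(real K - 1) / (real R - 1) * 1 \<le> (real K - 1) / (real R - 1) * real (mu R F i)"
      using mu1 a by (intro mult_left_mono) auto
    moreover have "(real K - 1) / (real R - 1) + (real R - real K) / (real R - 1) = 1"
    proof -
      have "real R - 1 \<noteq> 0" using R1 by simp
      then show ?thesis by (simp add: add_divide_distrib[symmetric])
    qed
    ultimately show ?thesis by linarith
  qed
  have nu_ge: "inverse (w i) \<le> \<nu> i" for i
  proof -
    have "inverse (w i) * 1 \<le> \<nu> i" unfolding \<nu>_def using c1[of i] wpos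
      by (intro mult_left_mono) (auto simp: less_imp_le)
    then show ?thesis by simp
  qed
  have nupos: "\<forall>i. 0 < \<nu> i"
  proof
    fix i
    have "0 < inverse (w i)" using wpos by simp
    then show "0 < \<nu> i" using nu_ge[of i] by linarith
  qed
  have nu: "\<forall>i. inverse (w i) * ((real K - 1) / (real R - 1) * real (mu R F i) + (real R - real K) / (real R - 1)) = \<nu> i"
    by (simp add: \<nu>_def)
  have absw: "(\<Sum>i\<in>UNIV. \<bar>w i\<bar>) = (\<Sum>i\<in>UNIV. w i)" using wpos by (intro sum.cong refl) (simp add: less_imp_le)
  have absnu: "(\<Sum>i\<in>UNIV. \<bar>\<nu> i\<bar>) = (\<Sum>i\<in>UNIV. \<nu> i)" using nupos by (intro sum.cong refl) (simp add: less_imp_le)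
  have rate: "1 - 4 * real K / (real R * ((\<Sum>i\<in>UNIV. \<bar>w i\<bar>) * (\<Sum>i\<in>UNIV. \<bar>\<nu> i\<bar>) + 2)) = \<rho>"
    unfolding absw absnu \<rho>_def L_def by simp
  have Npos: "0 < N" unfolding N_def using Ks_ne[OF KR] Ks_finite by (simp add: card_gt_0_iff)
  have dne: "draw_seqs R K k \<noteq> {}" using draw_card[of R K k] Npos unfolding N_def
    by (metis card.empty of_nat_0_less_iff power_not_zero less_irrefl)
  have E: "measure_pmf.expectation (pmf_of_set (draw_seqs R K k)) (\<lambda>Cs. \<Phi> (alg_iter R F w \<nu> y0 Cs))
      = (\<Sum>Cs\<in>draw_seqs R K k. \<Phi> (alg_iter R F w \<nu> y0 Cs)) / N ^ k"
    using integral_pmf_of_set[OF dne draw_finite] draw_card[of R K k] unfolding N_def by simp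
  have main: "measure_pmf.expectation (pmf_of_set (draw_seqs R K k)) (\<lambda>Cs. \<Phi> (alg_iter R F w \<nu> y0 Cs)) \<le> \<rho> ^ k * \<Phi> y0"
  proof (cases "2 \<le> CARD('n)")
    case True
    have L2: "2 \<le> L" unfolding L_def using L_ge2[OF True wpos] nu_ge by blast
    have rho0: "0 \<le> \<rho>"
    proof -
      have "4 / (L + 2) \<le> 1" using L2 by (simp add: divide_le_eq)
      moreover have "real K / real R \<le> 1" using KR R1 by (simp add: divide_le_eq)
      moreover have "0 \<le> 4 / (L + 2)" "0 \<le> real K / real R" using L2 by auto
      ultimately have "real K / real R * (4 / (L + 2)) \<le> 1 * 1" by (intro mult_mono) auto
      then show ?thesis by (simp add: \<rho>_def)
    qed
    have step: "(\<Sum>C\<in>Ksubsets R K. \<Phi> (alg_step R F w \<nu> C y)) \<le> real (card (Ksubsets R K)) * (\<rho> * \<Phi> y)"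
      if "y \<in> prod_base R F" for y
      using one_step(1)[OF subm wpos K1 KR R2 that nu nupos L2[unfolded L_def]]
      unfolding \<Phi>_def \<rho>_def L_def by simp
    have stepB: "alg_step R F w \<nu> C y \<in> prod_base R F" if "y \<in> prod_base R F" "C \<in> Ksubsets R K" for y C
      using step_in_B[OF that nupos] .
    have "(\<Sum>Cs\<in>draw_seqs R K k. \<Phi> (alg_iter R F w \<nu> y0 Cs)) \<le> N ^ k * (\<rho> ^ k * \<Phi> y0)"
      using iterate_bound[OF step stepB rho0 y0B, of k] unfolding N_def by simp
    then show ?thesis unfolding E using Npos by (simp add: divide_le_eq mult.commute)
  next
    case False
    have z: "\<Phi> y = 0" if "y \<in> prod_base R F" for y
      unfolding \<Phi>_def using Phi_zero_card1[OF False wpos that] .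
    have "(\<Sum>Cs\<in>draw_seqs R K k. \<Phi> (alg_iter R F w \<nu> y0 Cs)) = 0"
    proof (intro sum.neutral ballI)
      fix Cs assume "Cs \<in> draw_seqs R K k"
      then have "set Cs \<subseteq> Ksubsets R K" by (simp add: draw_seqs_def)
      then show "\<Phi> (alg_iter R F w \<nu> y0 Cs) = 0" using z iter_in_B[OF y0B _ nupos] by blast
    qed
    then show ?thesis unfolding E using z[OF y0B] by simp
  qed
  show ?thesis unfolding Let_def \<nu>_def[symmetric] rate using main unfolding \<Phi>_def .
qed

end
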